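(* (Beta-derivative identity.) Let $F\in R$ be $k$-monic of $Y$-degree $N$, with factorization $F=F_0\prod_{j=1}^{\chi(F)}F_j$, $F_j\in R^{\natural}$, and let $G\in R$ be such that $\mathrm{GCD}(F,G-c)=1$ for all $c\in k$ and $G_Y\in F_jR$ for $1\le j\le\chi(F)$. Then $$\mathrm{int}(F,G_X)=\mathrm{int}(F,G)-N+\beta(F,G),$$ where each term is an integer.
   Context: Let $k$ be an algebraically closed field of characteristic zero, $R=k((X))[Y]$, and $R^{\natural}$ the set of monic irreducible polynomials of positive degree in $Y$ over $k((X))$. Subscripts denote partial derivatives. For $F\in R$ let $N=\deg_Y F$ ($-\infty$ if $F=0$) and $F_0$ the coefficient of $Y^N$ ($0$ if $F=0$); $F$ is $k$-monic if $0\ne F_0\in k$. Write $F=F_0\prod_{j=1}^{\chi(F)}F_j$ with $F_j\in R^{\natural}$ (repetitions allowed). Intersection multiplicity: for nonzero $F,G\in R$ with $M=\deg_YG$, choose an integer $\nu>0$ divisible by all $\deg_Y F_j$ and write $F(X^\nu,Y)=F_0(X^\nu)\prod_{i=1}^N(Y-z_i(X))$, $z_i\in k((X))$; then $\mathrm{int}(F,G)=M\,\mathrm{ord}_XF_0+\frac1\nu\sum_{i}\mathrm{ord}_XG(X^\nu,z_i(X))$ ($\mathrm{ord}_X0=\infty$). If exactly one of $F,G$ is $0$, $\mathrm{int}(F,G)$ is $0$ if the other lies in $k((X))$ and $\infty$ otherwise; $\mathrm{int}(0,0)=\infty$. Sums with an infinite term are $\infty$. $\mathrm{GCD}(F,G)=1$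 means $\mathrm{int}(F,G)\ne\infty$. For $\Phi\in R^{\natural}$, $\mathrm{res}(\Phi,G)$ is the unique $\lambda\in k$ with $\mathrm{int}(\Phi,G-\lambda)>0$ if $\mathrm{int}(\Phi,G)\ge0$, and $\infty$ otherwise. For $\lambda\in k$: $\alpha_\lambda(F,G)=\{j:\mathrm{res}(F_j,G)=\lambda\}$, $\beta_\lambda(F,G)=\sum_{j\in\alpha_\lambda(F,G)}\mathrm{int}(F_j,G-\lambda)$, $\alpha(F,G)=\{\lambda\in k:\alpha_\lambda(F,G)\ne\emptyset\}$, $\beta(F,G)=\sum_{0\ne\lambda\in\alpha(F,G)}\beta_\lambda(F,G)$. *)

theory Defs
  imports "HOL-Computational_Algebra.Computational_Algebra" "HOL-Library.Extended_Real"
begin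

text \<open>R = k((X))[Y] is rendered as the type 'k fls poly. Elements of k are embedded via fls_const.\<close>

type_synonym 'k R = "'k fls poly"

definition Rnat :: "('k::field) R set" where
  "Rnat = {P. lead_coeff P = 1 \<and> degree P > 0 \<and> irreducible P}"

definition kmonic :: "('k::field) R \<Rightarrow> bool" where
  "kmonic F \<longleftrightarrow> F \<noteq> 0 \<and> lead_coeff F \<in> range fls_const"

definition ordX :: "('k::field) fls \<Rightarrow> ereal" where
  "ordX a = (if a = 0 then \<infinity> else ereal (of_int (fls_subdegree a)))"

definition kconst :: "'k::field \<Rightarrow> 'k R" where
  "kconst c = [:fls_const c:]"

definition nuF :: "('k::field) R \<Rightarrow> nat" where
  "nuF F = (SOME \<nu>. \<nu> > 0 \<and> (\<forall>P\<in>Rnat. P dvd F \<longrightarrow> degree P dvd \<nu>))"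

definition subsX :: "nat \<Rightarrow> ('k::field) R \<Rightarrow> 'k R" where
  "subsX \<nu> F = map_poly (\<lambda>a. fls_compose_power a \<nu>) F"

definition intm :: "('k::field) R \<Rightarrow> 'k R \<Rightarrow> ereal" where
  "intm F G =
     (if F \<noteq> 0 \<and> G \<noteq> 0 then
        (let \<nu> = nuF F in
          ereal (real (degree G)) * ordX (lead_coeff F)
          + ereal (1 / real \<nu>) *
            (\<Sum>z\<in>#proots (subsX \<nu> F). ordX (poly (subsX \<nu> G) z)))
      else if F = 0 \<and> G = 0 then \<infinity>
      else if F = 0 then (if degree G = 0 then 0 else \<infinity>)
      else (if degree F = 0 then 0 else \<infinity>))"

text \<open>res(Phi,G), with None standing for infinity.\<close>
definition res :: "('k::field) R \<Rightarrow> 'k R \<Rightarrow> 'k option" where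
  "res \<Phi> G = (if intm \<Phi> G \<ge> 0 then Some (THE c. intm \<Phi> (G - kconst c) > 0) else None)"

text \<open>Given the multiset Fs of monic irreducible factors F_j of F:\<close>
definition alphaL :: "('k::field) R multiset \<Rightarrow> 'k R \<Rightarrow> 'k \<Rightarrow> 'k R multiset" where
  "alphaL Fs G c = filter_mset (\<lambda>P. res P G = Some c) Fs"

definition betaL :: "('k::field) R multiset \<Rightarrow> 'k R \<Rightarrow> 'k \<Rightarrow> ereal" where
  "betaL Fs G c = (\<Sum>P\<in>#alphaL Fs G c. intm P (G - kconst c))"

definition alphaSet :: "('k::field) R multiset \<Rightarrow> 'k R \<Rightarrow> 'k set" where
  "alphaSet Fs G = {c. alphaL Fs G c \<noteq> {#}}"

definition betaF :: "('k::field) R multiset \<Rightarrow> 'k R \<Rightarrow> ereal" where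
  "betaF Fs G = (\<Sum>c\<in>alphaSet Fs G - {0}. betaL Fs G c)"

text \<open>Partial derivatives: G_Y is pderiv, G_X differentiates coefficients.\<close>
definition derX :: "('k::field) R \<Rightarrow> 'k R" where
  "derX G = map_poly fls_deriv G"

end

theory Submission imports Defs begin

unbundle fps_syntax



definition rhom :: "('a::comm_ring_1 \<Rightarrow> 'b::comm_ring_1) \<Rightarrow> bool" where
  "rhom f \<longleftrightarrow> f 0 = 0 \<and> f 1 = 1 \<and> (\<forall>a b. f (a + b) = f a + f b) \<and> (\<forall>a b. f (a * b) = f a * f b)"

lemma rhomD:
  assumes "rhom f"
  shows "f 0 = 0" "f 1 = 1" "f (a + b) = f a + f b" "f (a * b) = f a * f b"
  using assms by (auto simp: rhom_def)

lemma rhom_uminus: "rhom f \<Longrightarrow> f (- a) = - f a"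
  by (metis add.right_inverse add_eq_0_iff rhomD(1,3))

lemma rhom_diff: "rhom f \<Longrightarrow> f (a - b) = f a - f b"
  by (metis diff_conv_add_uminus rhomD(3) rhom_uminus)

lemma rhom_power: "rhom f \<Longrightarrow> f (a ^ n) = f a ^ n"
  by (induction n) (auto simp: rhomD)

lemma rhom_sum: "rhom f \<Longrightarrow> f (sum g A) = (\<Sum>x\<in>A. f (g x))"
  by (induction A rule: infinite_finite_induct) (auto simp: rhomD)

lemma map_poly_pCons_rhom: "rhom f \<Longrightarrow> map_poly f (pCons a p) = pCons (f a) (map_poly f p)"
  by (rule map_poly_pCons) (simp add: rhomD)

lemma map_poly_add_rhom: "rhom f \<Longrightarrow> map_poly f (p + q) = map_poly f p + map_poly f q"
  by (intro poly_eqI) (simp add: coeff_map_poly rhomD)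

lemma map_poly_uminus_rhom: "rhom f \<Longrightarrow> map_poly f (- p) = - map_poly f p"
  by (intro poly_eqI) (simp add: coeff_map_poly rhomD rhom_uminus)

lemma map_poly_diff_rhom: "rhom f \<Longrightarrow> map_poly f (p - q) = map_poly f p - map_poly f q"
  by (intro poly_eqI) (simp add: coeff_map_poly rhomD rhom_diff)

lemma map_poly_smult_rhom: "rhom f \<Longrightarrow> map_poly f (smult c p) = smult (f c) (map_poly f p)"
  by (intro poly_eqI) (simp add: coeff_map_poly rhomD)

lemma map_poly_mult_rhom: "rhom f \<Longrightarrow> map_poly f (p * q) = map_poly f p * map_poly f q"
proof (induction p)
  case 0 then show ?case by simp
next
  case (pCons a p)
  then show ?case
    by (simp add: map_poly_add_rhom map_poly_smult_rhom map_poly_pCons_rhom rhomD algebra_simps)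
qed

lemma map_poly_1_rhom: "rhom f \<Longrightarrow> map_poly f 1 = 1"
  by (simp add: rhomD)

lemma map_poly_const_rhom: "rhom f \<Longrightarrow> map_poly f [:c:] = [:f c:]"
  by (simp add: map_poly_pCons_rhom rhomD)

lemma map_poly_power_rhom: "rhom f \<Longrightarrow> map_poly f (p ^ n) = map_poly f p ^ n"
  by (induction n) (auto simp: map_poly_mult_rhom map_poly_1_rhom)

lemma map_poly_prod_mset_rhom: "rhom f \<Longrightarrow> map_poly f (prod_mset A) = prod_mset (image_mset (map_poly f) A)"
  by (induction A) (auto simp: map_poly_mult_rhom map_poly_1_rhom)

lemma map_poly_prod_rhom: "rhom f \<Longrightarrow> map_poly f (prod g A) = (\<Prod>x\<in>A. map_poly f (g x))"
  by (induction A rule: infinite_finite_induct) (auto simp: map_poly_mult_rhom map_poly_1_rhom)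

lemma poly_map_poly_rhom: "rhom f \<Longrightarrow> poly (map_poly f p) (f z) = f (poly p z)"
  by (induction p) (auto simp: map_poly_pCons_rhom rhomD)

lemma map_poly_pderiv_rhom:
  assumes "rhom f" shows "map_poly f (pderiv p) = pderiv (map_poly f p)"
proof -
  have of_nat: "f (of_nat n) = of_nat n" for n
    by (induction n) (auto simp: rhomD[OF assms])
  show ?thesis
    by (intro poly_eqI) (simp add: coeff_map_poly coeff_pderiv rhomD[OF assms] of_nat)
qed

lemma cp_rhom: "d > 0 \<Longrightarrow> rhom (\<lambda>a::'k::idom fls. fls_compose_power a d)"
  by (simp add: rhom_def)

lemma cp_nth_mult: "d > 0 \<Longrightarrow> fls_compose_power f d $$ (int d * n) = f $$ n"
  by (simp add: fls_nth_compose_power)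

lemma cp_inj: "d > 0 \<Longrightarrow> fls_compose_power f d = fls_compose_power g d \<Longrightarrow> f = g"
  by (intro fls_eqI) (metis cp_nth_mult)

lemma cp_eq0_iff [simp]: "d > 0 \<Longrightarrow> fls_compose_power f d = 0 \<longleftrightarrow> f = 0"
  by (metis cp_inj fls_compose_power_0_left)

lemma cp_1 [simp]: "fls_compose_power f (Suc 0) = f"
  by (intro fls_eqI) (simp add: fls_nth_compose_power)

lemma cp_1': "fls_compose_power f 1 = f"
  by simp

lemma cp_cp: "a > 0 \<Longrightarrow> b > 0 \<Longrightarrow> fls_compose_power (fls_compose_power f a) b = fls_compose_power f (a * b)"
proof (intro fls_eqI)
  fix n :: int assume a: "a > 0" and b: "b > 0"
  show "fls_compose_power (fls_compose_power f a) b $$ n = fls_compose_power f (a * b) $$ n"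
  proof (cases "int b dvd n")
    case True
    then obtain m where m: "n = int b * m" by blast
    have "int (a * b) dvd n \<longleftrightarrow> int a dvd m"
      using b by (simp add: m mult.commute)
    moreover have "n div int (a * b) = m div int a"
    proof -
      have "n div int (a * b) = (m * int b) div (int a * int b)" by (simp add: m mult.commute)
      also have "\<dots> = m div int a" using b by simp
      finally show ?thesis .
    qed
    ultimately have R: "fls_compose_power f (a * b) $$ n = (if int a dvd m then f $$ (m div int a) else 0)"
      unfolding fls_nth_compose_power[of "a * b", OF mult_pos_pos[OF a b]] by simp
    have L: "fls_compose_power (fls_compose_power f a) b $$ n = fls_compose_power f a $$ m"
      unfolding m using b by (rule cp_nth_mult)
    show ?thesis unfolding L R fls_nth_compose_power[OF a] ..
  next
    case False
    then have nd: "\<not> int (a * b) dvd n"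
      by (auto simp: of_nat_mult dest: dvd_mult_right)
    show ?thesis
      unfolding fls_nth_compose_power[of "a * b", OF mult_pos_pos[OF a b]] fls_nth_compose_power[OF b]
      using False nd by simp
  qed
qed

lemma cp_subdegree:
  assumes "d > 0" "f \<noteq> 0"
  shows "fls_subdegree (fls_compose_power f d) = int d * fls_subdegree f"
proof (rule fls_subdegree_eqI)
  show "fls_compose_power f d $$ (int d * fls_subdegree f) \<noteq> 0"
    using assms by (simp add: cp_nth_mult)
next
  fix k assume k: "k < int d * fls_subdegree f"
  show "fls_compose_power f d $$ k = 0"
  proof (cases "int d dvd k")
    case True
    then obtain j where j: "k = int d * j" by blast
    with k assms have "j < fls_subdegree f" by (simp add: mult_less_cancel_left)
    then show ?thesis using assms j by (simp add: cp_nth_mult)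
  qed (use assms in \<open>simp add: fls_nth_compose_power\<close>)
qed

lemma ordX_cp: "d > 0 \<Longrightarrow> ordX (fls_compose_power f d) = ereal (real d) * ordX f"
  by (simp add: ordX_def cp_subdegree)

definition subsX' :: "nat \<Rightarrow> ('k::field) R \<Rightarrow> 'k R" where "subsX' = subsX"

lemma subsX_1 [simp]: "subsX (Suc 0) p = p"
  by (rule poly_eqI) (simp add: subsX_def coeff_map_poly)

lemma subsX_1': "subsX 1 p = p"
  by simp

lemma subsX_subsX: "a > 0 \<Longrightarrow> b > 0 \<Longrightarrow> subsX b (subsX a p) = subsX (a * b) p"
  by (simp add: subsX_def map_poly_map_poly o_def cp_cp)

lemma coeff_subsX: "d > 0 \<Longrightarrow> coeff (subsX d p) i = fls_compose_power (coeff p i) d"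
  by (simp add: subsX_def coeff_map_poly)

lemma degree_subsX [simp]: "d > 0 \<Longrightarrow> degree (subsX d p) = degree p"
  by (simp add: degree_def coeff_subsX)

lemma subsX_eq0_iff [simp]: "d > 0 \<Longrightarrow> subsX d p = 0 \<longleftrightarrow> p = 0"
  by (simp add: poly_eq_iff coeff_subsX)

lemma lead_coeff_subsX: "d > 0 \<Longrightarrow> lead_coeff (subsX d p) = fls_compose_power (lead_coeff p) d"
  by (simp add: coeff_subsX)

lemma subsX_mult: "d > 0 \<Longrightarrow> subsX d (p * q) = subsX d p * subsX d q"
  unfolding subsX_def by (rule map_poly_mult_rhom[OF cp_rhom])

lemma subsX_add: "d > 0 \<Longrightarrow> subsX d (p + q) = subsX d p + subsX d q"
  unfolding subsX_def by (rule map_poly_add_rhom[OF cp_rhom])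

lemma subsX_diff: "d > 0 \<Longrightarrow> subsX d (p - q) = subsX d p - subsX d q"
  unfolding subsX_def by (rule map_poly_diff_rhom[OF cp_rhom])

lemma subsX_smult: "d > 0 \<Longrightarrow> subsX d (smult c p) = smult (fls_compose_power c d) (subsX d p)"
  unfolding subsX_def by (rule map_poly_smult_rhom[OF cp_rhom])

lemma subsX_const: "d > 0 \<Longrightarrow> subsX d [:c:] = [:fls_compose_power c d:]"
  unfolding subsX_def by (rule map_poly_const_rhom[OF cp_rhom])

lemma subsX_kconst [simp]: "d > 0 \<Longrightarrow> subsX d (kconst c) = kconst c"
  by (simp add: kconst_def subsX_const)

lemma subsX_prod_mset: "d > 0 \<Longrightarrow> subsX d (prod_mset A) = prod_mset (image_mset (subsX d) A)"
  unfolding subsX_def by (rule map_poly_prod_mset_rhom[OF cp_rhom])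

lemma subsX_prod: "d > 0 \<Longrightarrow> subsX d (prod g A) = (\<Prod>x\<in>A. subsX d (g x))"
  unfolding subsX_def by (rule map_poly_prod_rhom[OF cp_rhom])

lemma poly_subsX: "d > 0 \<Longrightarrow> poly (subsX d p) (fls_compose_power z d) = fls_compose_power (poly p z) d"
  unfolding subsX_def by (rule poly_map_poly_rhom[OF cp_rhom])

lemma pderiv_subsX: "d > 0 \<Longrightarrow> pderiv (subsX d p) = subsX d (pderiv p)"
  unfolding subsX_def by (rule map_poly_pderiv_rhom[OF cp_rhom, symmetric])

lemma subsX_dvd: "d > 0 \<Longrightarrow> p dvd q \<Longrightarrow> subsX d p dvd subsX d q"
  by (metis dvd_def subsX_mult)




function hsq :: "(nat \<Rightarrow> 'k::field poly) \<Rightarrow> 'k poly \<Rightarrow> 'k poly \<Rightarrow> 'k poly \<Rightarrow> nat \<Rightarrow> 'k poly \<times> 'k poly" where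
  "hsq Ps g h v n = (if n = 0 then (g, h) else
     (let R = Ps n - (\<Sum>i\<in>{1..<n}. fst (hsq Ps g h v i) * snd (hsq Ps g h v (n - i)));
          Gn = (v * R) mod g
      in (Gn, (R - h * Gn) div g)))"
  by pat_completeness auto
termination by (relation "measure (\<lambda>(Ps, g, h, v, n). n)") auto

declare hsq.simps [simp del]

lemma deg_lt_add: "degree p < d \<Longrightarrow> degree q < d \<Longrightarrow> degree (p + q) < d"
  using degree_add_le_max[of p q] by simp

lemma deg_lt_diff: "degree (p :: 'a::ab_group_add poly) < d \<Longrightarrow> degree q < d \<Longrightarrow> degree (p - q) < d"
  using degree_diff_le_max[of p q] by simp

lemma deg_lt_sum: "(\<And>i. i \<in> A \<Longrightarrow> degree (f i) < d) \<Longrightarrow> 0 < d \<Longrightarrow> degree (sum f A) < d"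
  by (induction A rule: infinite_finite_induct) (auto intro: deg_lt_add)

lemma hsq_step:
  fixes g h :: "'k::field poly"
  assumes dg: "degree g \<ge> 1" and dh: "degree h \<ge> 1" and uv: "u * g + v * h = 1"
    and dP: "\<And>n. n \<ge> 1 \<Longrightarrow> degree (Ps n) < degree g + degree h"
  shows "n \<ge> 1 \<Longrightarrow> degree (fst (hsq Ps g h v n)) < degree g \<and> degree (snd (hsq Ps g h v n)) < degree h \<and>
      g * snd (hsq Ps g h v n) + h * fst (hsq Ps g h v n) =
        Ps n - (\<Sum>i\<in>{1..<n}. fst (hsq Ps g h v i) * snd (hsq Ps g h v (n - i)))"
proof (induction n rule: less_induct)
  case (less n)
  define R where "R = Ps n - (\<Sum>i\<in>{1..<n}. fst (hsq Ps g h v i) * snd (hsq Ps g h v (n - i)))"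
  define Gn where "Gn = (v * R) mod g"
  define Hn where "Hn = (R - h * Gn) div g"
  have hs: "hsq Ps g h v n = (Gn, Hn)"
    using less.prems by (subst hsq.simps) (simp add: R_def Gn_def Hn_def Let_def)
  have g0: "g \<noteq> 0" using dg by auto
  have dR: "degree R < degree g + degree h"
    unfolding R_def
  proof (rule deg_lt_diff)
    show "degree (Ps n) < degree g + degree h" using dP less.prems by simp
    show "degree (\<Sum>i = 1..<n. fst (hsq Ps g h v i) * snd (hsq Ps g h v (n - i))) < degree g + degree h"
    proof (rule deg_lt_sum)
      fix i assume i: "i \<in> {1..<n}"
      have a: "degree (fst (hsq Ps g h v i)) < degree g" using less.IH[of i] i by auto
      have b: "degree (snd (hsq Ps g h v (n - i))) < degree h" using less.IH[of "n - i"] i by auto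
      show "degree (fst (hsq Ps g h v i) * snd (hsq Ps g h v (n - i))) < degree g + degree h"
        using degree_mult_le[of "fst (hsq Ps g h v i)" "snd (hsq Ps g h v (n - i))"] a b by linarith
    qed (use dg in simp)
  qed
  have dG: "degree Gn < degree g"
    using degree_mod_less[OF g0, of "v * R"] dg by (auto simp: Gn_def)
  have "R - h * Gn = g * (R * u + h * ((v * R) div g))"
  proof -
    have Gn_eq: "Gn = v * R - g * ((v * R) div g)"
      unfolding Gn_def by (simp add: minus_div_mult_eq_mod[symmetric] mult.commute)
    have "R - h * Gn = R * (1 - v * h) + h * g * ((v * R) div g)"
      unfolding Gn_eq by (simp add: algebra_simps)
    also have "1 - v * h = u * g" using uv by (simp add: algebra_simps)
    finally show ?thesis by (simp add: algebra_simps)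
  qed
  then have dvd: "g dvd R - h * Gn" by simp
  have eq: "g * Hn = R - h * Gn"
    unfolding Hn_def using dvd by simp
  have dH: "degree Hn < degree h"
  proof (cases "Hn = 0")
    case True then show ?thesis using dh by simp
  next
    case False
    have "degree (h * Gn) < degree g + degree h"
      using degree_mult_le[of h Gn] dG by linarith
    then have "degree (R - h * Gn) < degree g + degree h"
      using dR deg_lt_diff by blast
    then have "degree (g * Hn) < degree g + degree h" using eq by simp
    then show ?thesis using degree_mult_eq[OF g0 False] by simp
  qed
  show ?case using dG dH eq by (simp add: hs R_def)
qed

lemma hsq_sum:
  fixes g h :: "'k::field poly"
  assumes dg: "degree g \<ge> 1" and dh: "degree h \<ge> 1" and uv: "u * g + v * h = 1"
    and dP: "\<And>n. n \<ge> 1 \<Longrightarrow> degree (Ps n) < degree g + degree h"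
    and P0: "Ps 0 = g * h"
  shows "(\<Sum>i\<le>n. fst (hsq Ps g h v i) * snd (hsq Ps g h v (n - i))) = Ps n"
proof (cases "n = 0")
  case True
  then show ?thesis using P0 by (simp add: hsq.simps)
next
  case False
  have st: "g * snd (hsq Ps g h v n) + h * fst (hsq Ps g h v n) =
        Ps n - (\<Sum>i\<in>{1..<n}. fst (hsq Ps g h v i) * snd (hsq Ps g h v (n - i)))"
    using hsq_step[OF assms(1-4), where n=n] False by simp
  have "{..n} = insert 0 (insert n {1..<n})" using False by auto
  then have "(\<Sum>i\<le>n. fst (hsq Ps g h v i) * snd (hsq Ps g h v (n - i))) =
     fst (hsq Ps g h v 0) * snd (hsq Ps g h v n) + (fst (hsq Ps g h v n) * snd (hsq Ps g h v 0) +
     (\<Sum>i\<in>{1..<n}. fst (hsq Ps g h v i) * snd (hsq Ps g h v (n - i))))"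
    using False by simp
  also have "\<dots> = Ps n"
  proof -
    have "hsq Ps g h v 0 = (g, h)" by (simp add: hsq.simps)
    then show ?thesis using st by (simp add: algebra_simps)
  qed
  finally show ?thesis .
qed

definition liftp :: "nat \<Rightarrow> (nat \<Rightarrow> 'k::field poly) \<Rightarrow> 'k fls poly" where
  "liftp D Q = (\<Sum>j\<le>D. monom (fps_to_fls (Abs_fps (\<lambda>n. coeff (Q n) j))) j)"

lemma coeff_liftp:
  assumes "\<And>n. degree (Q n) \<le> D"
  shows "coeff (liftp D Q) j = fps_to_fls (Abs_fps (\<lambda>n. coeff (Q n) j))"
proof (cases "j \<le> D")
  case True
  then show ?thesis by (simp add: liftp_def coeff_sum coeff_monom)
next
  case False
  then have "coeff (Q n) j = 0" for n using assms[of n] by (simp add: coeff_eq_0)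
  then have "Abs_fps (\<lambda>n. coeff (Q n) j) = 0" by (simp add: fps_ext)
  then show ?thesis using False by (simp add: liftp_def coeff_sum coeff_monom)
qed

lemma fps_to_fls_sum: "fps_to_fls (sum f A) = (\<Sum>x\<in>A. fps_to_fls (f x))"
  by (induction A rule: infinite_finite_induct) auto

lemma coeff_liftp_mult:
  assumes "\<And>n. degree (Q n) \<le> D1" "\<And>n. degree (S n) \<le> D2"
  shows "coeff (liftp D1 Q * liftp D2 S) j =
           fps_to_fls (Abs_fps (\<lambda>n. coeff (\<Sum>i\<le>n. Q i * S (n - i)) j))"
proof -
  have "coeff (liftp D1 Q * liftp D2 S) j =
      (\<Sum>a\<le>j. fps_to_fls (Abs_fps (\<lambda>n. coeff (Q n) a) * Abs_fps (\<lambda>n. coeff (S n) (j - a))))"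
    by (simp add: coeff_mult coeff_liftp[OF assms(1)] coeff_liftp[OF assms(2)] fls_times_fps_to_fls)
  also have "\<dots> = fps_to_fls (\<Sum>a\<le>j. Abs_fps (\<lambda>n. coeff (Q n) a) * Abs_fps (\<lambda>n. coeff (S n) (j - a)))"
    by (simp add: fps_to_fls_sum)
  also have "(\<Sum>a\<le>j. Abs_fps (\<lambda>n. coeff (Q n) a) * Abs_fps (\<lambda>n. coeff (S n) (j - a))) =
             Abs_fps (\<lambda>n. coeff (\<Sum>i\<le>n. Q i * S (n - i)) j)"
  proof (rule fps_ext)
    fix n
    have "(\<Sum>a\<le>j. Abs_fps (\<lambda>n. coeff (Q n) a) * Abs_fps (\<lambda>n. coeff (S n) (j - a))) $ n =
          (\<Sum>a\<le>j. \<Sum>i\<le>n. coeff (Q i) a * coeff (S (n - i)) (j - a))"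
      by (simp add: fps_sum_nth fps_mult_nth atLeast0AtMost)
    also have "\<dots> = (\<Sum>i\<le>n. \<Sum>a\<le>j. coeff (Q i) a * coeff (S (n - i)) (j - a))"
      by (rule sum.swap)
    also have "\<dots> = coeff (\<Sum>i\<le>n. Q i * S (n - i)) j"
      by (simp add: coeff_sum coeff_mult)
    finally show "(\<Sum>a\<le>j. Abs_fps (\<lambda>n. coeff (Q n) a) * Abs_fps (\<lambda>n. coeff (S n) (j - a))) $ n =
       Abs_fps (\<lambda>n. coeff (\<Sum>i\<le>n. Q i * S (n - i)) j) $ n" by simp
  qed
  finally show ?thesis .
qed

definition integral :: "'k::field fls poly \<Rightarrow> bool" where
  "integral P \<longleftrightarrow> (\<forall>j. 0 \<le> fls_subdegree (coeff P j))"

definition redn :: "nat \<Rightarrow> 'k::field fls poly \<Rightarrow> 'k poly" where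
  "redn n P = map_poly (\<lambda>a. a $$ int n) P"

lemma coeff_redn: "coeff (redn n P) j = coeff P j $$ int n"
  by (simp add: redn_def coeff_map_poly)

lemma integral_coeff:
  assumes "integral P"
  shows "coeff P j = fps_to_fls (Abs_fps (\<lambda>n. coeff (redn n P) j))"
proof (rule fls_eqI)
  fix m :: int
  show "coeff P j $$ m = fps_to_fls (Abs_fps (\<lambda>n. coeff (redn n P) j)) $$ m"
  proof (cases "m < 0")
    case True
    then have "m < fls_subdegree (coeff P j)" using assms by (simp add: integral_def) (meson less_le_trans)
    then show ?thesis using True by simp
  qed (simp add: coeff_redn)
qed

lemma hensel:
  fixes P :: "'k::field fls poly" and g h :: "'k poly"
  assumes intP: "integral P" and mon: "lead_coeff P = 1"
    and red: "redn 0 P = g * h"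
    and gm: "lead_coeff g = 1" and dg: "degree g \<ge> 1" and dh: "degree h \<ge> 1" and uv: "u * g + v * h = 1"
  shows "\<exists>G H. P = G * H \<and> lead_coeff G = 1 \<and> degree G = degree g"
proof -
  define Ps where "Ps n = redn n P" for n
  have g0: "g \<noteq> 0" "h \<noteq> 0" using dg dh by auto
  have degP: "degree P = degree g + degree h"
  proof -
    have "degree (redn 0 P) = degree P"
      unfolding redn_def by (rule map_poly_degree_eq) (simp add: mon)
    then show ?thesis using red degree_mult_eq[OF g0] by simp
  qed
  have dP: "degree (Ps n) < degree g + degree h" if n: "n \<ge> 1" for n
  proof -
    have "degree (Ps n) \<le> degree g + degree h - 1"
    proof (rule degree_le, intro allI impI)
      fix i assume i: "degree g + degree h - 1 < i"
      show "coeff (Ps n) i = 0"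
      proof (cases "i = degree P")
        case True
        then show ?thesis using n mon by (simp add: Ps_def coeff_redn)
      next
        case False
        then have "i > degree P" using i degP by simp
        then show ?thesis by (simp add: Ps_def coeff_redn coeff_eq_0)
      qed
    qed
    then show ?thesis using dg by simp
  qed
  define Gs where "Gs n = fst (hsq Ps g h v n)" for n
  define Hs where "Hs n = snd (hsq Ps g h v n)" for n
  have st: "n \<ge> 1 \<Longrightarrow> degree (Gs n) < degree g \<and> degree (Hs n) < degree h" for n
    using hsq_step[OF dg dh uv dP, where n=n] by (simp add: Gs_def Hs_def)
  have G0: "Gs 0 = g" "Hs 0 = h" by (simp_all add: Gs_def Hs_def hsq.simps)
  have dGs: "degree (Gs n) \<le> degree g" for n
    using st[of n] G0 by (cases "n = 0") auto
  have dHs: "degree (Hs n) \<le> degree h" for n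
    using st[of n] G0 by (cases "n = 0") auto
  have sum: "(\<Sum>i\<le>n. Gs i * Hs (n - i)) = Ps n" for n
    unfolding Gs_def Hs_def by (rule hsq_sum[OF dg dh uv dP]) (simp_all add: Ps_def red)
  define G where "G = liftp (degree g) Gs"
  define H where "H = liftp (degree h) Hs"
  have "P = G * H"
  proof (rule poly_eqI)
    fix j
    show "coeff P j = coeff (G * H) j"
      unfolding G_def H_def coeff_liftp_mult[OF dGs dHs] sum Ps_def
      by (rule integral_coeff[OF intP])
  qed
  moreover have "coeff G (degree g) = 1"
  proof -
    have "Abs_fps (\<lambda>n. coeff (Gs n) (degree g)) = 1"
    proof (rule fps_ext)
      fix n show "Abs_fps (\<lambda>n. coeff (Gs n) (degree g)) $ n = 1 $ n"
        using st[of n] G0 gm by (cases "n = 0") (auto simp: coeff_eq_0)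
    qed
    then show ?thesis by (simp add: G_def coeff_liftp[OF dGs])
  qed
  moreover have "degree G = degree g"
  proof (rule antisym)
    show "degree G \<le> degree g"
    proof (rule degree_le, intro allI impI)
      fix i assume "degree g < i"
      then have "coeff (Gs n) i = 0" for n using dGs[of n] by (simp add: coeff_eq_0)
      then have "Abs_fps (\<lambda>n. coeff (Gs n) i) = 0" by (simp add: fps_ext)
      then show "coeff G i = 0" by (simp add: G_def coeff_liftp[OF dGs])
    qed
    show "degree g \<le> degree G" using calculation(2) by (simp add: le_degree)
  qed
  ultimately show ?thesis by auto
qed




lemma bezout_noroot:
  fixes g h :: "'k::alg_closed_field poly"
  assumes g0: "g \<noteq> 0" and nr: "\<And>x. poly g x = 0 \<Longrightarrow> poly h x \<noteq> 0"
  shows "\<exists>u v. u * g + v * h = 1"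
proof -
  define Q where "Q n \<longleftrightarrow> (\<exists>u v. u * g + v * h \<noteq> 0 \<and> degree (u * g + v * h) = n)" for n
  have "Q (degree g)" unfolding Q_def using g0 by (intro exI[of _ 1] exI[of _ 0]) simp
  define D where "D = (LEAST n. Q n)"
  have "Q D" unfolding D_def by (rule LeastI) fact
  then obtain u v where m0: "u * g + v * h \<noteq> 0" and dm: "degree (u * g + v * h) = D"
    unfolding Q_def by blast
  define m where "m = u * g + v * h"
  have mindeg: "degree (u' * g + v' * h) \<ge> D" if "u' * g + v' * h \<noteq> 0" for u' v'
    unfolding D_def by (rule Least_le) (use that in \<open>auto simp: Q_def\<close>)
  have dvd: "m dvd (u' * g + v' * h)" for u' v'
  proof -
    define x where "x = u' * g + v' * h"
    have "x mod m = (u' - u * (x div m)) * g + (v' - v * (x div m)) * h"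
      unfolding m_def x_def by (simp add: mod_eq_0_iff_dvd minus_div_mult_eq_mod[symmetric] algebra_simps
         flip: x_def m_def)
    moreover have "x mod m = 0"
    proof (rule ccontr)
      assume ne: "x mod m \<noteq> 0"
      have "degree (x mod m) < degree m" using degree_mod_less'[OF _ ne] m0 by (simp add: m_def)
      then show False using mindeg[of "u' - u * (x div m)" "v' - v * (x div m)"] ne calculation dm
        by (simp add: m_def)
    qed
    ultimately show ?thesis unfolding x_def by (simp add: mod_eq_0_iff_dvd)
  qed
  have dg: "m dvd g" using dvd[of 1 0] by simp
  have dh: "m dvd h" using dvd[of 0 1] by simp
  have "degree m = 0"
  proof (rule ccontr)
    assume "degree m \<noteq> 0"
    then obtain x where "poly m x = 0" using alg_closed_imp_poly_has_root[of m] by auto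
    then have "poly g x = 0" "poly h x = 0" using dg dh by (auto elim!: dvdE)
    then show False using nr by auto
  qed
  then obtain c where c: "m = [:c:]" by (meson degree_eq_zeroE)
  with m0 have c0: "c \<noteq> 0" by (simp add: m_def)
  have "smult (1 / c) u * g + smult (1 / c) v * h = smult (1/c) m" by (simp add: m_def smult_add_right)
  also have "\<dots> = 1" using c c0 by simp
  finally show ?thesis by blast
qed

lemma map_poly_pcompose_rhom:
  assumes "rhom f"
  shows "map_poly f (pcompose p q) = pcompose (map_poly f p) (map_poly f q)"
  by (induction p) (simp_all add: pcompose_pCons map_poly_pCons_rhom[OF assms] map_poly_add_rhom[OF assms]
      map_poly_mult_rhom[OF assms] map_poly_const_rhom[OF assms])

lemma subsX_pcompose: "d > 0 \<Longrightarrow> subsX d (pcompose p q) = pcompose (subsX d p) (subsX d q)"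
  unfolding subsX_def by (rule map_poly_pcompose_rhom[OF cp_rhom])

lemma subsX_pCons: "d > 0 \<Longrightarrow> subsX d (pCons a p) = pCons (fls_compose_power a d) (subsX d p)"
  unfolding subsX_def by (rule map_poly_pCons_rhom[OF cp_rhom])

lemma pcompose_monom1: "pcompose (monom 1 n) q = q ^ n"
  by (induction n) (simp_all add: monom_Suc pcompose_pCons monom_0 pcompose_1)

lemma pcompose_X_power: "pcompose ([:0, 1:] ^ n) q = q ^ n"
  by (induction n) (simp_all add: pcompose_mult pcompose_pCons pcompose_1)

lemma coeff_linear_power_below:
  fixes s :: "'a::comm_ring_1"
  shows "coeff ([:s, 1:] ^ Suc m) m = of_nat (Suc m) * s"
proof (induction m)
  case 0 then show ?case by simp
next
  case (Suc m)
  have "[:s, 1:] ^ Suc (Suc m) = smult s ([:s, 1:] ^ Suc m) + pCons 0 ([:s, 1:] ^ Suc m)"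
    by (simp add: mult_pCons_left)
  then have "coeff ([:s, 1:] ^ Suc (Suc m)) (Suc m) = s * coeff ([:s, 1:] ^ Suc m) (Suc m) + coeff ([:s, 1:] ^ Suc m) m"
    by simp
  also have "\<dots> = s + of_nat (Suc m) * s" unfolding coeff_linear_power Suc.IH by simp
  finally show ?case by (simp add: algebra_simps)
qed

lemma degree_linear_power': "degree ([:s, 1:] ^ n) = n"
  by (rule degree_linear_power)

lemma coeff_pcompose_shift:
  fixes p :: "'a::{comm_ring_1} poly"
  assumes "degree p = Suc m"
  shows "coeff (pcompose p [:s, 1:]) m = coeff p m + of_nat (Suc m) * s * lead_coeff p"
proof -
  have "pcompose p [:s, 1:] = (\<Sum>i\<le>Suc m. smult (coeff p i) ([:s, 1:] ^ i))"
  proof -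
    have "pcompose p [:s, 1:] = pcompose (\<Sum>i\<le>degree p. monom (coeff p i) i) [:s, 1:]"
      by (simp add: poly_as_sum_of_monoms)
    also have "\<dots> = (\<Sum>i\<le>degree p. smult (coeff p i) ([:s, 1:] ^ i))"
      by (simp add: pcompose_sum monom_altdef pcompose_smult pcompose_X_power)
    finally show ?thesis using assms by simp
  qed
  then have "coeff (pcompose p [:s, 1:]) m = (\<Sum>i\<le>Suc m. coeff p i * coeff ([:s, 1:] ^ i) m)"
    by (simp add: coeff_sum)
  also have "\<dots> = (\<Sum>i\<in>{m, Suc m}. coeff p i * coeff ([:s, 1:] ^ i) m)"
  proof (rule sum.mono_neutral_right)
    show "\<forall>i\<in>{..Suc m} - {m, Suc m}. coeff p i * coeff ([:s, 1:] ^ i) m = 0"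
    proof
      fix i assume "i \<in> {..Suc m} - {m, Suc m}"
      then have "i < m" by auto
      then show "coeff p i * coeff ([:s, 1:] ^ i) m = 0"
        by (simp add: coeff_eq_0 degree_linear_power)
    qed
  qed auto
  also have "\<dots> = coeff p m * coeff ([:s, 1:] ^ m) m + coeff p (Suc m) * coeff ([:s, 1:] ^ Suc m) m"
    by simp
  also have "\<dots> = coeff p m + of_nat (Suc m) * s * lead_coeff p"
    unfolding coeff_linear_power coeff_linear_power_below using assms by (simp add: algebra_simps)
  finally show ?thesis .
qed


lemma poly_deg1_root:
  fixes P :: "'a::comm_ring_1 poly"
  assumes "degree P = 1" "lead_coeff P = 1"
  shows "poly P (- coeff P 0) = 0"
proof -
  have "poly P (- coeff P 0) = (\<Sum>i\<le>1. coeff P i * (- coeff P 0) ^ i)"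
    using assms by (simp add: poly_altdef)
  also have "\<dots> = 0" using assms by simp
  finally show ?thesis .
qed

lemma subsX_linear: "n > 0 \<Longrightarrow> subsX n [:a, b:] = [:fls_compose_power a n, fls_compose_power b n:]"
  by (simp add: subsX_pCons subsX_const)

lemma puiseux_root:
  fixes P :: "'k::{alg_closed_field, field_char_0} fls poly"
  assumes "lead_coeff P = 1" "degree P \<ge> 1"
  shows "\<exists>n>0. \<exists>z. poly (subsX n P) z = 0"
  using assms
proof (induction "degree P" arbitrary: P rule: less_induct)
  case less
  define d where "d = degree P"
  show ?case
  proof (cases "d = 1")
    case True
    have "poly P (- coeff P 0) = 0"
      using poly_deg1_root[of P] True less.prems by (simp add: d_def)
    then show ?thesis by (intro exI[of _ 1]) auto
  next
    case False
    then have d2: "d \<ge> 2" using less.prems by (simp add: d_def)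
    then obtain m where dm: "d = Suc m" by (cases d) auto
    have m1: "m \<ge> 1" using d2 dm by simp
    define s where "s = - coeff P m * fls_const (1 / of_nat d)"
    define P1 where "P1 = pcompose P [:s, 1:]"
    have P1deg: "degree P1 = d"
      by (simp add: P1_def degree_pcompose d_def)
    have P1lead: "lead_coeff P1 = 1"
      using lead_coeff_comp[of "[:s, 1:]" P] less.prems by (simp add: P1_def degree_pcompose)
    have P1m: "coeff P1 m = 0"
    proof -
      have "coeff P1 m = coeff P m + of_nat d * s * lead_coeff P"
        unfolding P1_def dm by (rule coeff_pcompose_shift) (use dm in \<open>simp add: d_def\<close>)
      also have "of_nat d * s = - coeff P m * (fls_const (of_nat d) * fls_const (1 / of_nat d))"
        by (simp add: s_def fls_of_nat)
      also have "fls_const (of_nat d) * fls_const (1 / of_nat d) = (1 :: 'k fls)"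
        using d2 by (simp add: fls_const_mult_const)
      finally show ?thesis using less.prems by simp
    qed
    have root_back: "poly (subsX n P) (z + fls_compose_power s n) = 0"
      if "n > 0" "poly (subsX n P1) z = 0" for n z
    proof -
      have "subsX n P1 = pcompose (subsX n P) [:fls_compose_power s n, 1:]"
        using that by (simp add: P1_def subsX_pcompose subsX_linear)
      then show ?thesis using that by (simp add: poly_pcompose add.commute)
    qed
    show ?thesis
    proof (cases "\<forall>i<m. coeff P1 i = 0")
      case True
      then have "poly P1 0 = 0" using m1 by (simp add: poly_0_coeff_0)
      then have "poly (subsX 1 P) (0 + fls_compose_power s 1) = 0"
        by (intro root_back) auto
      then show ?thesis by (intro exI[of _ 1]) auto
    next
      case False
      then obtain i0 where i0: "i0 < m" "coeff P1 i0 \<noteq> 0" by auto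
      define q where "q = (fact d :: nat)"
      have q0: "q > 0" by (simp add: q_def)
      define S where "S = {i. i < d \<and> coeff P1 i \<noteq> 0}"
      define v where "v i = (int q * fls_subdegree (coeff P1 i)) div int (d - i)" for i
      have vdiv: "int q * fls_subdegree (coeff P1 i) = int (d - i) * v i" if "i < d" for i
      proof -
        have "(d - i) dvd q" unfolding q_def using that by (intro dvd_fact) auto
        then have "int (d - i) dvd int q * fls_subdegree (coeff P1 i)"
          by (simp add: int_dvd_int_iff)
        then show ?thesis by (simp add: v_def)
      qed
      have Sfin: "finite S" by (simp add: S_def)
      have Sne: "i0 \<in> S" using i0 dm by (simp add: S_def)
      define \<mu> where "\<mu> = Min (v ` S)"
      have \<mu>le: "\<mu> \<le> v i" if "i \<in> S" for i
        unfolding \<mu>_def using Sfin that by simp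
      have "\<mu> \<in> v ` S" unfolding \<mu>_def using Sfin Sne by (intro Min_in) auto
      then obtain i1 where i1: "i1 \<in> S" "v i1 = \<mu>" by auto
      have i1m: "i1 < d" "i1 \<noteq> m" using i1 P1m by (auto simp: S_def)
      define P2 where "P2 = subsX q P1"
      define P3 where "P3 = smult (fls_X_intpow (- \<mu> * int d)) (pcompose P2 [:0, fls_X_intpow \<mu>:])"
      have cP3: "coeff P3 i = fls_X_intpow (\<mu> * int i - \<mu> * int d) * fls_compose_power (coeff P1 i) q" for i
      proof -
        have "coeff P3 i = fls_X_intpow (- \<mu> * int d) * (fls_X_intpow \<mu> ^ i * fls_compose_power (coeff P1 i) q)"
          by (simp add: P3_def coeff_pcompose_linear P2_def coeff_subsX q0)
        also have "\<dots> = fls_X_intpow (- \<mu> * int d) * fls_X_intpow (int i * \<mu>) * fls_compose_power (coeff P1 i) q"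
          by (simp add: fls_X_intpow_power mult.assoc)
        also have "fls_X_intpow (- \<mu> * int d) * fls_X_intpow (int i * \<mu>) = (fls_X_intpow (\<mu> * int i - \<mu> * int d) :: 'k fls)"
          using fls_X_intpow_times_fls_X_intpow[of "- \<mu> * int d" "int i * \<mu>", where 'a='k]
          by (simp add: algebra_simps)
        finally show ?thesis .
      qed
      have sdP3: "fls_subdegree (coeff P3 i) = int (d - i) * (v i - \<mu>)" if "i \<in> S" for i
      proof -
        have ne: "coeff P1 i \<noteq> 0" "i < d" using that by (auto simp: S_def)
        have "fls_subdegree (coeff P3 i) = int q * fls_subdegree (coeff P1 i) + (\<mu> * int i - \<mu> * int d)"
          unfolding cP3 using ne q0 fls_subdegree_mult_fls_X_intpow(1)[of "fls_compose_power (coeff P1 i) q" "\<mu> * int i - \<mu> * int d"]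
          by (simp add: cp_subdegree)
        also have "\<dots> = int (d - i) * v i + (\<mu> * int i - \<mu> * int d)" using vdiv ne by simp
        also have "\<dots> = int (d - i) * (v i - \<mu>)" using ne by (simp add: of_nat_diff algebra_simps)
        finally show ?thesis .
      qed
      have cP3d: "coeff P3 d = 1" using P1lead P1deg q0 by (simp add: cP3)
      have cP3gt: "coeff P3 i = 0" if "i > d" for i
        using that P1deg by (simp add: cP3 coeff_eq_0)
      have P3deg: "degree P3 = d"
      proof (rule antisym)
        show "degree P3 \<le> d" by (rule degree_le) (use cP3gt in auto)
        show "d \<le> degree P3" using cP3d by (intro le_degree) simp
      qed
      have P3lead: "lead_coeff P3 = 1" using P3deg cP3d by simp
      have intP3: "integral P3"
        unfolding integral_def
      proof
        fix i
        show "0 \<le> fls_subdegree (coeff P3 i)"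
        proof (cases "i \<in> S")
          case True
          then show ?thesis using sdP3[OF True] \<mu>le[OF True] by simp
        next
          case False
          then have "coeff P1 i = 0 \<or> i \<ge> d" by (auto simp: S_def)
          then consider "coeff P1 i = 0" | "i = d" | "i > d" by linarith
          then show ?thesis
          proof cases
            case 1 then show ?thesis by (simp add: cP3)
          next
            case 2 then show ?thesis using cP3d by simp
          next
            case 3 then show ?thesis using cP3gt by simp
          qed
        qed
      qed
      define r where "r = redn 0 P3"
      have cr: "coeff r i = coeff P3 i $$ 0" for i by (simp add: r_def coeff_redn)
      have rdeg: "degree r = d"
        unfolding r_def redn_def P3deg[symmetric] by (rule map_poly_degree_eq) (simp add: P3lead)
      have rlead: "lead_coeff r = 1" using rdeg cr cP3d by simp
      have rm: "coeff r m = 0" using P1m cr by (simp add: cP3)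
      have ri1: "coeff r i1 \<noteq> 0"
      proof -
        have "fls_subdegree (coeff P3 i1) = 0" using sdP3[OF i1(1)] i1(2) by simp
        moreover have "coeff P3 i1 \<noteq> 0"
          using i1(1) q0 by (simp add: cP3 S_def fls_shift_eq0_iff)
        ultimately show ?thesis using nth_fls_subdegree_nonzero[of "coeff P3 i1"] cr by simp
      qed
      have r0: "r \<noteq> 0" using rlead by auto
      obtain a where ra: "poly r a = 0"
        using alg_closed_imp_poly_has_root[of r] rdeg d2 by auto
      define e where "e = order a r"
      obtain h where rh: "r = [:- a, 1:] ^ e * h" and hnd: "\<not> [:- a, 1:] dvd h"
        using order_decomp[OF r0, of a] unfolding e_def by blast
      have e1: "e \<ge> 1" using ra r0 order_root[of r a] by (simp add: e_def)
      have h0: "h \<noteq> 0" using hnd by auto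
      have ha: "poly h a \<noteq> 0" using hnd by (simp add: poly_eq_0_iff_dvd)
      have degsum: "d = e + degree h"
        using rdeg rh h0 by (simp add: degree_mult_eq degree_linear_power)
      have hlead: "lead_coeff h = 1"
        using rlead rh by (simp add: lead_coeff_mult lead_coeff_power)
      have ed: "e < d"
      proof (rule ccontr)
        assume "\<not> e < d"
        then have "degree h = 0" using degsum by simp
        then have "h = 1" using hlead by (metis degree_eq_zeroE lead_coeff_pCons(2) one_pCons pCons_0_0)
        then have rr: "r = pcompose (monom 1 d) [:- a, 1:]" using rh degsum by (simp add: pcompose_monom1)
        have "coeff r m = coeff (monom 1 d) m + of_nat (Suc m) * (- a) * lead_coeff (monom (1::'k) d)"
          unfolding rr dm by (rule coeff_pcompose_shift) (simp add: degree_monom_eq)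
        then have "of_nat (Suc m) * a = 0" using rm dm by (simp add: degree_monom_eq)
        then have "a = 0" by (metis mult_eq_0_iff of_nat_neq_0)
        then have "r = monom 1 d" using rr by (simp add: pcompose_monom1 monom_altdef)
        then show False using ri1 i1m by (simp add: coeff_monom)
      qed
      obtain u w where uv: "u * [:- a, 1:] ^ e + w * h = 1"
      proof -
        have "\<exists>u w. u * [:- a, 1:] ^ e + w * h = 1"
        proof (rule bezout_noroot)
          show "[:- a, 1:] ^ e \<noteq> 0" by simp
          fix x assume "poly ([:- a, 1:] ^ e) x = 0"
          then have "x = a" by simp
          then show "poly h x \<noteq> 0" using ha by simp
        qed
        then show ?thesis using that by blast
      qed
      have "\<exists>G H. P3 = G * H \<and> lead_coeff G = 1 \<and> degree G = degree ([:- a, 1:] ^ e)"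
      proof (rule hensel[OF intP3 P3lead])
        show "redn 0 P3 = [:- a, 1:] ^ e * h" using r_def rh by simp
        show "lead_coeff ([:- a, 1:] ^ e) = 1" by (simp add: lead_coeff_power)
        show "1 \<le> degree ([:- a, 1:] ^ e)" using e1 by (simp add: degree_linear_power)
        show "1 \<le> degree h" using ed degsum by simp
        show "u * [:- a, 1:] ^ e + w * h = 1" by (rule uv)
      qed
      then obtain G H where PGH: "P3 = G * H" and Glead: "lead_coeff G = 1" and Gdeg: "degree G = degree ([:- a, 1:] ^ e)"
        by blast
      have "degree G < degree P" using Gdeg ed by (simp add: degree_linear_power d_def)
      moreover have "degree G \<ge> 1" using Gdeg e1 by (simp add: degree_linear_power)
      ultimately obtain n z where n0: "n > 0" and zG: "poly (subsX n G) z = 0"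
        using less.hyps[of G] Glead by blast
      have "poly (subsX n P3) z = 0" using zG n0 by (simp add: PGH subsX_mult)
      moreover have "subsX n P3 = smult (fls_compose_power (fls_X_intpow (- \<mu> * int d)) n)
           (pcompose (subsX n P2) [:0, fls_compose_power (fls_X_intpow \<mu>) n:])"
        using n0 by (simp add: P3_def subsX_smult subsX_pcompose subsX_linear)
      ultimately have "poly (subsX n P2) (fls_compose_power (fls_X_intpow \<mu>) n * z) = 0"
        using n0 by (simp add: poly_pcompose mult.commute fls_shift_eq0_iff)
      then have "poly (subsX (q * n) P1) (fls_compose_power (fls_X_intpow \<mu>) n * z) = 0"
        using n0 q0 by (simp add: P2_def subsX_subsX)
      then have "poly (subsX (q * n) P) (fls_compose_power (fls_X_intpow \<mu>) n * z + fls_compose_power s (q * n)) = 0"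
        using n0 q0 by (intro root_back) auto
      then show ?thesis using n0 q0 by (intro exI[of _ "q * n"]) auto
    qed
  qed
qed




section \<open>Roots of unity\<close>

definition U :: "nat \<Rightarrow> 'k::field set" where "U n = {u. u ^ n = 1}"

lemma U_mult: "u \<in> U n \<Longrightarrow> u' \<in> U n \<Longrightarrow> u * u' \<in> U n"
  by (simp add: U_def power_mult_distrib)

lemma U_inverse: "u \<in> U n \<Longrightarrow> inverse u \<in> U n"
  by (simp add: U_def power_inverse)

lemma U_1: "1 \<in> U n" by (simp add: U_def)

lemma U_nonzero: "n > 0 \<Longrightarrow> u \<in> U n \<Longrightarrow> u \<noteq> 0"
  by (auto simp: U_def power_0_left)

lemma finite_U: "n > 0 \<Longrightarrow> finite (U (n :: nat) :: 'k::field set)"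
proof -
  assume n: "n > 0"
  define p :: "'k poly" where "p = monom 1 n - 1"
  have "U n = {x::'k. poly p x = 0}" by (simp add: U_def poly_monom p_def)
  moreover have "p \<noteq> 0"
  proof
    assume "p = 0"
    then have "coeff p n = (0::'k)" by simp
    then show False using n by (simp add: coeff_monom p_def)
  qed
  ultimately show ?thesis using poly_roots_finite[of p] by simp
qed

lemma card_set_mset_distinct:
  assumes "\<And>x. count A x \<le> 1"
  shows "card (set_mset A) = size A"
proof -
  have "A = mset_set (set_mset A)"
  proof (rule multiset_eqI)
    fix x show "count A x = count (mset_set (set_mset A)) x"
    proof (cases "x \<in># A")
      case True
      then have "count A x = 1" using assms[of x] by (metis One_nat_def count_eq_zero_iff le_SucE le_zero_eq)
      then show ?thesis using True by simp
    next
      case False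
      then show ?thesis by (simp add: not_in_iff)
    qed
  qed
  then have "size A = size (mset_set (set_mset A))" by simp
  then show ?thesis by simp
qed

lemma alg_closed_size_proots:
  fixes p :: "'k::alg_closed_field poly"
  assumes "p \<noteq> 0"
  shows "size (proots p) = degree p"
proof -
  obtain A where A: "size A = degree p" "p = smult (lead_coeff p) (\<Prod>x\<in>#A. [:-x, 1:])"
    using alg_closed_imp_factorization[OF assms] by blast
  have "proots p = proots (\<Prod>x\<in>#A. [:-x, 1:])"
    using assms by (subst A(2)) simp
  also have "\<dots> = A"
  proof (induction A)
    case (add x A)
    have "proots (\<Prod>x\<in>#add_mset x A. [:-x, 1:]) = proots ([:-x, 1:] * (\<Prod>x\<in>#A. [:-x, 1:]))" by simp
    also have "\<dots> = proots [:-x, 1:] + proots (\<Prod>x\<in>#A. [:-x, 1:])"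
      by (rule proots_mult) (auto simp: prod_mset_zero_iff)
    finally show ?case using add by simp
  qed simp
  finally show ?thesis using A(1) by simp
qed

lemma card_U:
  assumes n: "n > 0"
  shows "card (U n :: 'k::{alg_closed_field, field_char_0} set) = n"
proof -
  define p :: "'k poly" where "p = monom 1 n - 1"
  have cn: "coeff p n = 1" using n by (simp add: p_def coeff_monom)
  have p0: "p \<noteq> 0" using cn by auto
  have dp: "degree p = n"
  proof (rule antisym)
    show "degree p \<le> n" unfolding p_def
      by (rule degree_le) (auto simp: coeff_monom)
    show "n \<le> degree p" using cn by (intro le_degree) simp
  qed
  have Uroots: "U n = {x. poly p x = 0}" by (simp add: U_def p_def poly_monom)
  have rsq: "rsquarefree p"
    unfolding rsquarefree_roots
  proof (intro allI notI)
    fix a assume a: "poly p a = 0 \<and> poly (pderiv p) a = 0"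
    then have "a ^ n = 1" by (simp add: p_def poly_monom)
    then have "a \<noteq> 0" using n by (metis power_0_left zero_neq_one gr_implies_not0)
    moreover have "poly (pderiv p) a = of_nat n * a ^ (n - 1)"
      by (simp add: p_def pderiv_diff pderiv_monom poly_monom)
    ultimately show False using a n by simp
  qed
  have "count (proots p) x \<le> 1" for x
  proof -
    have "order x p = 0 \<or> order x p = 1" using rsq by (simp add: rsquarefree_def)
    then show ?thesis using p0 by auto
  qed
  then have "card (set_mset (proots p)) = size (proots p)" by (rule card_set_mset_distinct)
  also have "\<dots> = n" using alg_closed_size_proots[OF p0] dp by simp
  finally show ?thesis using Uroots p0 by simp
qed

lemma U_powi_mod:
  assumes "u \<in> U n" "n > 0"
  shows "u powi i = u ^ nat (i mod int n)"
proof -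
  have u0: "u \<noteq> 0" using assms by (simp add: U_nonzero)
  have "i = int n * (i div int n) + i mod int n" by simp
  then have "u powi i = u powi (int n * (i div int n)) * u powi (i mod int n)"
    using u0 by (metis power_int_add)
  also have "u powi (int n * (i div int n)) = 1"
    using assms by (simp add: power_int_mult U_def)
  also have "u powi (i mod int n) = u ^ nat (i mod int n)"
    using assms by (metis int_nat_eq of_nat_0_less_iff pos_mod_sign power_int_of_nat)
  finally show ?thesis by simp
qed

lemma U_all_powi_one:
  assumes n: "n > 0" and all: "\<forall>u \<in> (U n :: 'k::{alg_closed_field, field_char_0} set). u powi i = 1"
  shows "int n dvd i"
proof (rule ccontr)
  assume nd: "\<not> int n dvd i"
  define r where "r = nat (i mod int n)"
  have r0: "r > 0" using nd n by (simp add: r_def dvd_eq_mod_eq_0 order_le_neq_trans)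
  have "i mod int n < int n" "0 \<le> i mod int n" using n by simp_all
  then have rn: "r < n" by (simp add: r_def nat_less_iff)
  have "(U n :: 'k set) \<subseteq> U r"
  proof
    fix x assume x: "x \<in> (U n :: 'k set)"
    have "x powi i = 1" using all x by blast
    moreover have "x powi i = x ^ r" using U_powi_mod[OF x n] by (simp add: r_def)
    ultimately show "x \<in> U r" by (simp add: U_def)
  qed
  then have "card (U n :: 'k set) \<le> card (U r :: 'k set)" using finite_U[OF r0] by (rule card_mono[rotated])
  then show False using card_U[OF n, where 'k='k] card_U[OF r0, where 'k='k] rn by linarith
qed

section \<open>The automorphisms X -> u X\<close>

definition scl :: "'k::field \<Rightarrow> 'k fls \<Rightarrow> 'k fls" where
  "scl u f = Abs_fls (\<lambda>i. u powi i * f $$ i)"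

lemma scl_nth: "scl u f $$ i = u powi i * f $$ i"
  unfolding scl_def by (rule nth_Abs_fls_lower_bound[of "fls_subdegree f"]) simp

lemma scl_0 [simp]: "scl u 0 = 0" by (intro fls_eqI) (simp add: scl_nth)

lemma scl_eq0_iff [simp]: "u \<noteq> 0 \<Longrightarrow> scl u f = 0 \<longleftrightarrow> f = 0"
  by (auto simp: fls_eq_iff scl_nth)

lemma scl_subdegree: "u \<noteq> 0 \<Longrightarrow> fls_subdegree (scl u f) = fls_subdegree f"
  by (cases "f = 0") (auto intro!: fls_subdegree_eqI simp: scl_nth)

lemma scl_add: "scl u (f + g) = scl u f + scl u g"
  by (intro fls_eqI) (simp add: scl_nth algebra_simps)

lemma scl_1: "scl u 1 = 1"
  by (intro fls_eqI) (simp add: scl_nth)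

lemma scl_mult:
  assumes u: "u \<noteq> 0"
  shows "scl u (f * g) = scl u f * scl u g"
proof (intro fls_eqI)
  fix n
  have "(scl u f * scl u g) $$ n = (\<Sum>i=fls_subdegree f..n - fls_subdegree g. scl u f $$ i * scl u g $$ (n - i))"
    using fls_times_nth(2)[of "scl u f" "scl u g" n] u by (simp add: scl_subdegree)
  also have "\<dots> = (\<Sum>i=fls_subdegree f..n - fls_subdegree g. u powi n * (f $$ i * g $$ (n - i)))"
  proof (rule sum.cong)
    fix i
    have "u powi i * u powi (n - i) = u powi n" using u by (simp flip: power_int_add)
    then show "scl u f $$ i * scl u g $$ (n - i) = u powi n * (f $$ i * g $$ (n - i))"
      by (simp add: scl_nth algebra_simps)
  qed simp
  also have "\<dots> = u powi n * (f * g) $$ n"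
    by (simp add: fls_times_nth(2) sum_distrib_left)
  finally show "scl u (f * g) $$ n = (scl u f * scl u g) $$ n" by (simp add: scl_nth)
qed

lemma scl_rhom: "u \<noteq> 0 \<Longrightarrow> rhom (scl u)"
  by (simp add: rhom_def scl_add scl_1 scl_mult)

lemma scl_scl: "u \<noteq> 0 \<Longrightarrow> u' \<noteq> 0 \<Longrightarrow> scl u (scl u' f) = scl (u * u') f"
  by (intro fls_eqI) (simp add: scl_nth power_int_mult_distrib)

lemma scl_one [simp]: "scl 1 f = f"
  by (intro fls_eqI) (simp add: scl_nth)

lemma scl_cp:
  assumes "u \<in> U n" "n > 0"
  shows "scl u (fls_compose_power a n) = fls_compose_power a n"
proof (intro fls_eqI)
  fix i
  show "scl u (fls_compose_power a n) $$ i = fls_compose_power a n $$ i"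
  proof (cases "int n dvd i")
    case True
    then obtain j where "i = int n * j" by blast
    then have "u powi i = 1" using assms by (simp add: power_int_mult U_def)
    then show ?thesis by (simp add: scl_nth)
  qed (use assms in \<open>simp add: scl_nth fls_nth_compose_power\<close>)
qed

lemma ordX_scl: "u \<noteq> 0 \<Longrightarrow> ordX (scl u f) = ordX f"
  by (simp add: ordX_def scl_subdegree)

lemma scl_nth0: "scl u f $$ 0 = f $$ 0"
  by (simp add: scl_nth)

definition dec :: "nat \<Rightarrow> 'k::field fls \<Rightarrow> 'k fls" where
  "dec n f = Abs_fls (\<lambda>j. f $$ (int n * j))"

lemma dec_nth: "n > 0 \<Longrightarrow> dec n f $$ j = f $$ (int n * j)"
  unfolding dec_def
proof (rule nth_Abs_fls_lower_bound[of "min 0 (fls_subdegree f)"], intro allI impI)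
  fix k :: int assume n: "n > 0" and k: "k < min 0 (fls_subdegree f)"
  have nk: "int n * k \<le> 1 * k" using n k by (intro mult_right_mono_neg) auto
  have "int n * k < fls_subdegree f" using nk k by linarith
  then show "f $$ (int n * k) = 0" by simp
qed

lemma cp_dec:
  assumes n: "n > 0" and supp: "\<And>i. f $$ i \<noteq> 0 \<Longrightarrow> int n dvd i"
  shows "fls_compose_power (dec n f) n = f"
proof (intro fls_eqI)
  fix i
  show "fls_compose_power (dec n f) n $$ i = f $$ i"
  proof (cases "int n dvd i")
    case True
    then show ?thesis using n by (auto simp: fls_nth_compose_power dec_nth)
  next
    case False
    then show ?thesis using n supp by (auto simp: fls_nth_compose_power)
  qed
qed

lemma fixed_all_U:
  assumes n: "n > 0" and fx: "\<And>u. u \<in> (U n :: 'k::{alg_closed_field, field_char_0} set) \<Longrightarrow> scl u f = f"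
  shows "fls_compose_power (dec n f) n = f"
proof (rule cp_dec[OF n])
  fix i assume fi: "f $$ i \<noteq> 0"
  show "int n dvd i"
  proof (rule U_all_powi_one[OF n], intro ballI)
    fix u :: 'k assume u: "u \<in> U n"
    have "scl u f $$ i = f $$ i" using fx[OF u] by simp
    then show "u powi i = 1" using fi by (simp add: scl_nth)
  qed
qed


section \<open>Orbits of roots\<close>

lemma scl_fix_subsX:
  assumes "u \<in> U n" "n > 0"
  shows "map_poly (scl u) (subsX n p) = subsX n p"
  by (rule poly_eqI) (simp add: coeff_map_poly coeff_subsX assms scl_cp)

lemma scl_poly_subsX:
  assumes "u \<in> U n" "n > 0"
  shows "scl u (poly (subsX n p) w) = poly (subsX n p) (scl u w)"
proof -
  have u0: "u \<noteq> 0" using assms U_nonzero by blast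
  have "scl u (poly (subsX n p) w) = poly (map_poly (scl u) (subsX n p)) (scl u w)"
    by (rule poly_map_poly_rhom[OF scl_rhom[OF u0], symmetric])
  then show ?thesis using scl_fix_subsX[OF assms] by simp
qed

lemma prod_linear_dvd:
  fixes p :: "'a::idom poly"
  assumes "finite Orb" "\<And>v. v \<in> Orb \<Longrightarrow> poly p v = 0"
  shows "(\<Prod>v\<in>Orb. [:-v, 1:]) dvd p"
  using assms
proof (induction Orb arbitrary: p rule: finite_induct)
  case empty then show ?case by simp
next
  case (insert x Orb)
  have "(\<Prod>v\<in>Orb. [:-v, 1:]) dvd p" using insert by auto
  then obtain s where s: "p = (\<Prod>v\<in>Orb. [:-v, 1:]) * s" by (elim dvdE)
  have "poly (\<Prod>v\<in>Orb. [:-v, 1:]) x \<noteq> 0"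
    using insert.hyps by (simp add: poly_prod prod_zero_iff)
  moreover have "poly p x = 0" using insert.prems by simp
  ultimately have "poly s x = 0" using s by simp
  then have "[:-x, 1:] dvd s" by (simp add: poly_eq_0_iff_dvd)
  then obtain t where t: "s = [:-x, 1:] * t" by (elim dvdE)
  have eq: "(\<Prod>v\<in>insert x Orb. [:-v, 1:]) = [:-x, 1:] * (\<Prod>v\<in>Orb. [:-v, 1:])"
    using insert.hyps by (rule prod.insert)
  have "p = ([:-x, 1:] * (\<Prod>v\<in>Orb. [:-v, 1:])) * t" using s t by (simp only: mult_ac)
  then show ?case unfolding eq by (metis dvd_triv_left)
qed

lemma subsX_0 [simp]: "subsX n 0 = 0"
  by (simp add: subsX_def)

lemma subsX_dvd_cancel:
  fixes A B :: "'k::field R"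
  assumes n: "n > 0" and d: "subsX n A dvd subsX n B"
  shows "A dvd B"
proof (cases "A = 0")
  case True
  then show ?thesis using d n by simp
next
  case False
  have "subsX n B = subsX n A * subsX n (B div A) + subsX n (B mod A)"
    using n by (simp flip: subsX_mult subsX_add)
  then have "subsX n A dvd subsX n (B mod A)"
    using d by (metis dvd_add_right_iff dvd_triv_left)
  moreover have "B mod A = 0"
  proof (rule ccontr)
    assume ne: "B mod A \<noteq> 0"
    have "degree (B mod A) < degree A" using degree_mod_less'[OF False ne] .
    moreover have "degree (subsX n A) \<le> degree (subsX n (B mod A))"
      using calculation dvd_imp_degree_le[OF \<open>subsX n A dvd subsX n (B mod A)\<close>] ne n by simp
    ultimately show False using n by simp
  qed
  ultimately show ?thesis by (simp add: mod_eq_0_iff_dvd)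
qed

lemma monic_dvd_antisym:
  fixes p q :: "'a::idom poly"
  assumes "lead_coeff p = 1" "lead_coeff q = 1" "p dvd q" "q dvd p"
  shows "p = q"
proof -
  have p0: "p \<noteq> 0" "q \<noteq> 0" using assms by auto
  obtain c where c: "q = p * c" using assms(3) by (elim dvdE)
  have "degree q = degree p" using dvd_imp_degree_le[OF assms(3) p0(2)] dvd_imp_degree_le[OF assms(4) p0(1)] by simp
  moreover have c0: "c \<noteq> 0" using c p0 by auto
  ultimately have "degree c = 0" using c p0 by (simp add: degree_mult_eq)
  moreover have "lead_coeff c = 1" using c assms by (simp add: lead_coeff_mult)
  ultimately have "c = 1" by (metis degree_eq_zeroE lead_coeff_pCons(2) one_pCons pCons_0_0)
  then show ?thesis using c by simp
qed

lemma scl_inv: "u \<noteq> 0 \<Longrightarrow> scl (inverse u) (scl u f) = f"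
  by (simp add: scl_scl)

lemma orbit_image:
  assumes n: "n > 0" and u: "u \<in> (U n :: 'k::field set)"
  shows "scl u ` ((\<lambda>u. scl u w) ` U n) = (\<lambda>u. scl u w) ` U n"
proof -
  have u0: "u \<noteq> 0" using U_nonzero[OF n u] .
  show ?thesis
  proof (intro equalityI subsetI)
    fix x assume "x \<in> scl u ` ((\<lambda>u. scl u w) ` U n)"
    then obtain u' where u': "u' \<in> U n" "x = scl u (scl u' w)" by auto
    then show "x \<in> (\<lambda>u. scl u w) ` U n"
      using U_nonzero[OF n u'(1)] u0 U_mult[OF u u'(1)] by (auto simp: scl_scl)
  next
    fix x assume "x \<in> (\<lambda>u. scl u w) ` U n"
    then obtain u' where u': "u' \<in> U n" "x = scl u' w" by auto
    have "inverse u * u' \<in> U n" using U_mult[OF U_inverse[OF u] u'(1)] .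
    moreover have "x = scl u (scl (inverse u * u') w)"
      using u0 U_nonzero[OF n u'(1)] u' by (simp add: scl_scl field_simps)
    ultimately show "x \<in> scl u ` ((\<lambda>u. scl u w) ` U n)" by blast
  qed
qed

lemma scl_inj: "u \<noteq> 0 \<Longrightarrow> inj (scl u)"
  by (metis injI scl_inv)

lemma orbit_split:
  fixes P :: "'k::{alg_closed_field, field_char_0} R"
  assumes P: "P \<in> Rnat" and n: "n > 0" and w: "poly (subsX n P) w = 0"
  shows "subsX n P = (\<Prod>v\<in>(\<lambda>u. scl u w) ` U n. [:-v, 1:]) \<and> card ((\<lambda>u. scl u w) ` U n) = degree P"
proof -
  define Orb where "Orb = (\<lambda>u. scl u w) ` U n"
  define Q where "Q = (\<Prod>v\<in>Orb. [:-v, 1:])"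
  have Pm: "lead_coeff P = 1" "degree P > 0" "irreducible P" using P by (auto simp: Rnat_def)
  have P0: "P \<noteq> 0" using Pm by auto
  have Orbfin: "finite Orb" unfolding Orb_def by (intro finite_imageI finite_U[OF n])
  have roots: "poly (subsX n P) v = 0" if v: "v \<in> Orb" for v
  proof -
    obtain u where u: "u \<in> U n" "v = scl u w" using v by (auto simp: Orb_def)
    have "poly (subsX n P) v = scl u (poly (subsX n P) w)" using scl_poly_subsX[OF u(1) n] u by simp
    then show ?thesis using w by simp
  qed
  have Qdvd: "Q dvd subsX n P" unfolding Q_def by (rule prod_linear_dvd[OF Orbfin roots])
  have Qfix: "map_poly (scl u) Q = Q" if u: "u \<in> U n" for u
  proof -
    have u0: "u \<noteq> 0" using U_nonzero[OF n u] .
    have "map_poly (scl u) Q = (\<Prod>v\<in>Orb. [:- scl u v, 1:])"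
      unfolding Q_def by (simp add: map_poly_prod_rhom[OF scl_rhom[OF u0]] map_poly_pCons_rhom[OF scl_rhom[OF u0]]
         rhom_uminus[OF scl_rhom[OF u0]] scl_1 map_poly_const_rhom[OF scl_rhom[OF u0]])
    also have "\<dots> = (\<Prod>v\<in>scl u ` Orb. [:- v, 1:])"
      by (rule prod.reindex[symmetric, unfolded o_def]) (use scl_inj[OF u0] in \<open>auto simp: inj_on_def inj_def\<close>)
    also have "scl u ` Orb = Orb" unfolding Orb_def by (rule orbit_image[OF n u])
    finally show ?thesis by (simp add: Q_def)
  qed
  define Qt where "Qt = map_poly (dec n) Q"
  have QQt: "Q = subsX n Qt"
  proof (rule poly_eqI)
    fix i
    have "fls_compose_power (dec n (coeff Q i)) n = coeff Q i"
    proof (rule fixed_all_U[OF n])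
      fix u :: 'k assume u: "u \<in> U n"
      have "coeff (map_poly (scl u) Q) i = coeff Q i" using Qfix[OF u] by simp
      then show "scl u (coeff Q i) = coeff Q i" by (simp add: coeff_map_poly)
    qed
    moreover have "dec n 0 = (0 :: 'k fls)" using n by (intro fls_eqI) (simp add: dec_nth)
    ultimately show "coeff Q i = coeff (subsX n Qt) i"
      using n by (simp add: Qt_def coeff_subsX coeff_map_poly)
  qed
  have QtP: "Qt dvd P" using subsX_dvd_cancel[OF n] Qdvd QQt by simp
  have Qlead: "lead_coeff Q = 1" unfolding Q_def by (simp add: lead_coeff_prod)
  have Qdeg: "degree Q = card Orb" unfolding Q_def
    by (subst degree_prod_sum_eq) auto
  have Qtlead: "lead_coeff Qt = 1"
  proof -
    have "fls_compose_power (lead_coeff Qt) n = fls_compose_power 1 n"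
      using Qlead QQt n by (simp add: coeff_subsX)
    then show ?thesis using cp_inj[OF n] by blast
  qed
  have "w \<in> Orb" unfolding Orb_def using U_1[of n] by (metis image_eqI scl_one)
  then have "card Orb \<ge> 1" using Orbfin by (simp add: Suc_le_eq card_gt_0_iff) blast
  then have Qtdeg: "degree Qt \<ge> 1" using Qdeg QQt n by simp
  have Qt0: "Qt \<noteq> 0" using Qtlead by auto
  have "\<not> is_unit Qt" using Qtdeg is_unit_iff_degree[OF Qt0] by simp
  then have "P dvd Qt" using irreducibleD'[OF Pm(3) QtP] by simp
  then have "Qt = P" using monic_dvd_antisym[OF Qtlead Pm(1) QtP] by simp
  then show ?thesis using QQt Qdeg n by (simp add: Q_def Orb_def)
qed


lemma descend:
  fixes P :: "'k::{alg_closed_field, field_char_0} R"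
  assumes P: "P \<in> Rnat" and n: "n > 0" and w: "poly (subsX n P) w = 0"
  shows "\<exists>w'. poly (subsX (degree P) P) w' = 0"
proof -
  define d where "d = degree P"
  define Orb where "Orb = (\<lambda>u. scl u w) ` U n"
  have cO: "card Orb = d" using orbit_split[OF P n w] by (simp add: Orb_def d_def)
  define Stab where "Stab = {u \<in> U n. scl u w = w}"
  have Ufin: "finite (U n :: 'k set)" by (rule finite_U[OF n])
  have Sfin: "finite Stab" using Ufin by (simp add: Stab_def)
  define fib where "fib o' = {u \<in> U n. scl u w = o'}" for o'
  have fibcard: "card (fib o') = card Stab" if o': "o' \<in> Orb" for o'
  proof -
    obtain u0 where u0: "u0 \<in> U n" "o' = scl u0 w" using o' by (auto simp: Orb_def)
    have u00: "u0 \<noteq> 0" using U_nonzero[OF n u0(1)] .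
    have "fib o' = (\<lambda>s. u0 * s) ` Stab"
    proof (intro equalityI subsetI)
      fix u assume "u \<in> fib o'"
      then have u: "u \<in> U n" "scl u w = scl u0 w" by (auto simp: fib_def u0)
      have u_0: "u \<noteq> 0" using U_nonzero[OF n u(1)] .
      have "inverse u0 * u \<in> Stab"
      proof -
        have "scl (inverse u0 * u) w = scl (inverse u0) (scl u w)" using u00 u_0 by (simp add: scl_scl)
        also have "\<dots> = w" using u(2) u00 by (simp add: scl_inv)
        finally show ?thesis using U_mult[OF U_inverse[OF u0(1)] u(1)] by (simp add: Stab_def)
      qed
      moreover have "u = u0 * (inverse u0 * u)" using u00 by (simp add: field_simps)
      ultimately show "u \<in> (\<lambda>s. u0 * s) ` Stab" by blast
    next
      fix u assume "u \<in> (\<lambda>s. u0 * s) ` Stab"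
      then obtain s where s: "s \<in> Stab" "u = u0 * s" by auto
      have "s \<noteq> 0" using s U_nonzero[OF n] by (auto simp: Stab_def)
      then have "scl u w = scl u0 (scl s w)" using s u00 by (simp add: scl_scl)
      then show "u \<in> fib o'" using s U_mult[OF u0(1)] u0 by (auto simp: fib_def Stab_def)
    qed
    moreover have "inj_on (\<lambda>s. u0 * s) Stab" using u00 by (auto simp: inj_on_def)
    ultimately show ?thesis by (simp add: card_image)
  qed
  have "U n = (\<Union>o'\<in>Orb. fib o')" by (auto simp: fib_def Orb_def)
  moreover have "card (\<Union>o'\<in>Orb. fib o') = (\<Sum>o'\<in>Orb. card (fib o'))"
  proof (rule card_UN_disjoint)
    show "finite Orb" unfolding Orb_def using Ufin by simp
    show "\<forall>i\<in>Orb. finite (fib i)" using Ufin by (simp add: fib_def)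
    show "\<forall>i\<in>Orb. \<forall>j\<in>Orb. i \<noteq> j \<longrightarrow> fib i \<inter> fib j = {}" by (auto simp: fib_def)
  qed
  ultimately have "card (U n :: 'k set) = (\<Sum>o'\<in>Orb. card (fib o'))" by simp
  also have "\<dots> = d * card Stab" using fibcard cO by simp
  finally have ndt: "n = d * card Stab" using card_U[OF n, where 'k='k] by simp
  define t where "t = card Stab"
  have t0: "t > 0" using ndt n by (simp add: t_def)
  have d0: "d > 0" using ndt n by simp
  have Snz: "s \<noteq> 0" if "s \<in> Stab" for s using that U_nonzero[OF n] by (auto simp: Stab_def)
  have Smult: "x * y \<in> Stab" if "x \<in> Stab" "y \<in> Stab" for x y
    using that Snz[OF that(1)] Snz[OF that(2)] by (auto simp: Stab_def U_mult scl_scl[symmetric])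
  have Sinv: "inverse x \<in> Stab" if "x \<in> Stab" for x
  proof -
    have "scl (inverse x) w = scl (inverse x) (scl x w)" using that by (simp add: Stab_def)
    also have "\<dots> = w" using Snz[OF that] by (simp add: scl_inv)
    finally show ?thesis using that U_inverse by (auto simp: Stab_def)
  qed
  have StU: "Stab \<subseteq> U t"
  proof
    fix x assume x: "x \<in> Stab"
    have "(\<lambda>s. x * s) ` Stab = Stab"
    proof (intro equalityI subsetI)
      fix y assume "y \<in> (\<lambda>s. x * s) ` Stab" then show "y \<in> Stab" using Smult x by auto
    next
      fix y assume y: "y \<in> Stab"
      have "y = x * (inverse x * y)" using Snz[OF x] by (simp add: field_simps)
      then show "y \<in> (\<lambda>s. x * s) ` Stab" using Smult[OF Sinv[OF x] y] by blast
    qed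
    moreover have "inj_on (\<lambda>s. x * s) Stab" using Snz[OF x] by (auto simp: inj_on_def)
    ultimately have "(\<Prod>s\<in>Stab. x * s) = (\<Prod>s\<in>Stab. s)"
      using prod.reindex[of "\<lambda>s. x * s" Stab "\<lambda>s. s"] by simp
    then have "x ^ t * (\<Prod>s\<in>Stab. s) = (\<Prod>s\<in>Stab. s)"
      by (simp add: prod.distrib t_def)
    moreover have "(\<Prod>s\<in>Stab. s) \<noteq> 0" using Sfin Snz by (simp add: prod_zero_iff)
    ultimately show "x \<in> U t" by (simp add: U_def)
  qed
  have StU': "Stab = U t"
    using card_subset_eq[OF finite_U[OF t0] StU] card_U[OF t0, where 'k='k] by (simp add: t_def)
  have "fls_compose_power (dec t w) t = w"
    by (rule fixed_all_U[OF t0]) (use StU' in \<open>auto simp: Stab_def\<close>)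
  then have "poly (subsX n P) w = fls_compose_power (poly (subsX d P) (dec t w)) t"
    using ndt t0 d0 by (metis poly_subsX subsX_subsX t_def)
  then have "poly (subsX d P) (dec t w) = 0" using w t0 by simp
  then show ?thesis by (auto simp: d_def)
qed

lemma split_level:
  fixes P :: "'k::{alg_closed_field, field_char_0} R"
  assumes P: "P \<in> Rnat"
  shows "\<exists>w. subsX (degree P) P = (\<Prod>u\<in>U (degree P). [:- scl u w, 1:]) \<and> inj_on (\<lambda>u. scl u w) (U (degree P))"
proof -
  have Pm: "lead_coeff P = 1" "degree P > 0" using P by (auto simp: Rnat_def)
  obtain n z where n: "n > 0" and z: "poly (subsX n P) z = 0"
    using puiseux_root[of P] Pm by auto
  obtain w where w: "poly (subsX (degree P) P) w = 0" using descend[OF P n z] by blast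
  have sp: "subsX (degree P) P = (\<Prod>v\<in>(\<lambda>u. scl u w) ` U (degree P). [:-v, 1:])"
    and cd: "card ((\<lambda>u. scl u w) ` U (degree P)) = degree P"
    using orbit_split[OF P Pm(2) w] by auto
  have inj: "inj_on (\<lambda>u. scl u w) (U (degree P))"
    by (rule eq_card_imp_inj_on[OF finite_U[OF Pm(2)]]) (simp add: cd card_U[OF Pm(2)])
  have "subsX (degree P) P = (\<Prod>u\<in>U (degree P). [:- scl u w, 1:])"
    using sp prod.reindex[OF inj, of "\<lambda>v. [:-v, 1:]"] by simp
  then show ?thesis using inj by blast
qed




lemma nuF_prop:
  fixes F :: "'k::field R"
  assumes F0: "F \<noteq> 0"
  shows "nuF F > 0 \<and> (\<forall>P\<in>Rnat. P dvd F \<longrightarrow> degree P dvd nuF F)"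
proof -
  have "\<exists>\<nu>. \<nu> > 0 \<and> (\<forall>P\<in>Rnat. P dvd F \<longrightarrow> degree P dvd \<nu>)"
  proof (intro exI conjI ballI impI)
    show "fact (degree F) > (0::nat)" by simp
    fix P :: "'k R" assume P: "P \<in> Rnat" "P dvd F"
    have "degree P \<le> degree F" using dvd_imp_degree_le[OF P(2) F0] .
    moreover have "degree P \<ge> 1" using P by (simp add: Rnat_def)
    ultimately show "degree P dvd fact (degree F)" by (intro dvd_fact) auto
  qed
  then show ?thesis unfolding nuF_def by (rule someI_ex)
qed

definition wP :: "'k::{alg_closed_field, field_char_0} R \<Rightarrow> 'k fls" where
  "wP P = (SOME w. subsX (degree P) P = (\<Prod>u\<in>U (degree P). [:- scl u w, 1:]) \<and> inj_on (\<lambda>u. scl u w) (U (degree P)))"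

lemma wP:
  assumes "P \<in> Rnat"
  shows "subsX (degree P) P = (\<Prod>u\<in>U (degree P). [:- scl u (wP P), 1:]) \<and> inj_on (\<lambda>u. scl u (wP P)) (U (degree P))"
  unfolding wP_def by (rule someI_ex) (rule split_level[OF assms])

lemma wP_root:
  assumes "P \<in> Rnat"
  shows "poly (subsX (degree P) P) (wP P) = 0"
proof -
  have dP: "degree P > 0" using assms by (simp add: Rnat_def)
  have "poly (\<Prod>u\<in>U (degree P). [:- scl u (wP P), 1:]) (wP P) = (\<Prod>u\<in>U (degree P). wP P - scl u (wP P))"
    by (simp add: poly_prod)
  also have "\<dots> = 0"
    by (rule prod_zero[OF finite_U[OF dP]]) (use U_1 in \<open>auto intro!: bexI[of _ 1]\<close>)
  finally show ?thesis using wP[OF assms] by simp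
qed

definition Isum :: "nat \<Rightarrow> 'k::field R \<Rightarrow> 'k R \<Rightarrow> ereal" where
  "Isum \<nu> P H = (\<Sum>z\<in>#proots (subsX \<nu> P). ordX (poly (subsX \<nu> H) z))"

lemma sum_mset_singletons:
  "finite A \<Longrightarrow> sum_mset (image_mset f (\<Sum>u\<in>A. {#g u#})) = (\<Sum>u\<in>A. f (g u))"
  by (induction A rule: finite_induct) auto

lemma sum_const_ereal:
  assumes "finite A" "c \<noteq> -\<infinity>"
  shows "(\<Sum>x\<in>A. c) = ereal (real (card A)) * (c :: ereal)"
proof (cases c)
  case (real r)
  then show ?thesis by simp
next
  case PInf
  then show ?thesis using assms by (cases "A = {}") (auto simp: sum_Pinfty)
qed (use assms in simp)

lemma ordX_not_MInf [simp]: "ordX f \<noteq> -\<infinity>"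
  by (simp add: ordX_def)

lemma Isum_factor:
  fixes P H :: "'k::{alg_closed_field, field_char_0} R"
  assumes P: "P \<in> Rnat" and \<nu>: "\<nu> > 0" and dv: "degree P dvd \<nu>"
  shows "Isum \<nu> P H = ereal (real \<nu>) * ordX (poly (subsX (degree P) H) (wP P))"
proof -
  define d where "d = degree P"
  define w where "w = wP P"
  have d0: "d > 0" using P by (simp add: Rnat_def d_def)
  obtain m where m: "\<nu> = d * m" using dv by (auto simp: d_def)
  have m0: "m > 0" using m \<nu> by simp
  have sp: "subsX d P = (\<Prod>u\<in>U d. [:- scl u w, 1:])" using wP[OF P] by (simp add: d_def w_def)
  have "subsX \<nu> P = subsX m (subsX d P)" using m d0 m0 by (simp add: subsX_subsX)
  also have "\<dots> = (\<Prod>u\<in>U d. [:- fls_compose_power (scl u w) m, 1:])"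
    using m0 by (simp add: sp subsX_prod subsX_linear)
  finally have sp2: "subsX \<nu> P = (\<Prod>u\<in>U d. [:- fls_compose_power (scl u w) m, 1:])" .
  have pr: "proots (subsX \<nu> P) = (\<Sum>u\<in>U d. {#fls_compose_power (scl u w) m#})"
    unfolding sp2 by (subst proots_prod) auto
  have trm: "ordX (poly (subsX \<nu> H) (fls_compose_power (scl u w) m)) = ereal (real m) * ordX (poly (subsX d H) w)"
    if u: "u \<in> U d" for u
  proof -
    have u0: "u \<noteq> 0" using U_nonzero[OF d0 u] .
    have "poly (subsX \<nu> H) (fls_compose_power (scl u w) m) = poly (subsX m (subsX d H)) (fls_compose_power (scl u w) m)"
      using m d0 m0 by (simp add: subsX_subsX)
    also have "\<dots> = fls_compose_power (poly (subsX d H) (scl u w)) m" using m0 by (rule poly_subsX)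
    also have "poly (subsX d H) (scl u w) = scl u (poly (subsX d H) w)"
      using scl_poly_subsX[OF u d0] by simp
    finally show ?thesis using m0 u0 by (simp add: ordX_cp ordX_scl)
  qed
  have "Isum \<nu> P H = (\<Sum>u\<in>U d. ordX (poly (subsX \<nu> H) (fls_compose_power (scl u w) m)))"
    unfolding Isum_def pr by (rule sum_mset_singletons[OF finite_U[OF d0]])
  also have "\<dots> = (\<Sum>u\<in>(U d :: 'k set). ereal (real m) * ordX (poly (subsX d H) w))"
    using trm by simp
  also have "\<dots> = ereal (real d) * (ereal (real m) * ordX (poly (subsX d H) w))"
    using finite_U[OF d0] card_U[OF d0, where 'k='k]
    by (subst sum_const_ereal) (auto simp: ordX_def)
  also have "\<dots> = ereal (real \<nu>) * ordX (poly (subsX d H) w)"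
    by (simp add: m mult.assoc[symmetric])
  finally show ?thesis by (simp add: d_def w_def)
qed

lemma ereal_inv_cancel:
  assumes "\<nu> > (0::nat)"
  shows "ereal (1 / real \<nu>) * (ereal (real \<nu>) * x) = x"
  using assms by (cases x) auto

lemma ordX_one: "ordX (1 :: 'k::field fls) = 0"
  by (simp add: ordX_def zero_ereal_def)

lemma ordX_const: "c \<noteq> 0 \<Longrightarrow> ordX (fls_const (c :: 'k::field)) = 0"
  by (simp add: ordX_def zero_ereal_def)

definition hP :: "'k::{alg_closed_field, field_char_0} R \<Rightarrow> 'k R \<Rightarrow> 'k fls" where
  "hP P H = poly (subsX (degree P) H) (wP P)"

lemma intm_factor:
  fixes P H :: "'k::{alg_closed_field, field_char_0} R"
  assumes P: "P \<in> Rnat"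
  shows "intm P H = ordX (hP P H)"
proof -
  have P0: "P \<noteq> 0" and dP: "degree P > 0" and Pl: "lead_coeff P = 1" using P by (auto simp: Rnat_def)
  show ?thesis
  proof (cases "H = 0")
    case True
    then show ?thesis using P0 dP by (simp add: intm_def hP_def ordX_def)
  next
    case False
    define \<nu> where "\<nu> = nuF P"
    have nu: "\<nu> > 0" "degree P dvd \<nu>" using nuF_prop[OF P0] P by (auto simp: \<nu>_def)
    have "intm P H = ereal (real (degree H)) * ordX (lead_coeff P) + ereal (1 / real \<nu>) * Isum \<nu> P H"
      using P0 False by (simp add: intm_def Isum_def \<nu>_def Let_def)
    also have "\<dots> = ordX (hP P H)"
      using Isum_factor[OF P nu] nu by (simp add: Pl ordX_one ereal_inv_cancel hP_def)
    finally show ?thesis .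
  qed
qed


lemma sum_mset_ereal_PInf:
  fixes M :: "ereal multiset"
  assumes "\<forall>x\<in>#M. x \<noteq> -\<infinity>"
  shows "sum_mset M = \<infinity> \<longleftrightarrow> (\<exists>x\<in>#M. x = \<infinity>)"
  using assms
proof (induction M)
  case (add x M)
  have "sum_mset M \<noteq> -\<infinity>"
  proof -
    have "\<forall>y\<in>#M. y \<noteq> -\<infinity>" using add.prems by simp
    then show ?thesis
    proof (induction M)
      case (add y M) then show ?case by (cases y; cases "sum_mset M") auto
    qed simp
  qed
  then show ?case using add by (cases x; cases "sum_mset M") auto
qed simp

lemma ereal_mult_sum_mset:
  assumes "c \<ge> 0"
  shows "ereal c * sum_mset (image_mset f M) = sum_mset (image_mset (\<lambda>x. ereal c * f x) M)"
proof (induction M)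
  case (add x M)
  then show ?case using distrib_left_ereal_nn[OF assms, of "f x"] by (simp add: mult.commute)
qed simp

lemma sum_mset_sum_mset_image:
  "sum_mset (image_mset f (\<Sum>P\<in>#Fs. M P)) = (\<Sum>P\<in>#Fs. sum_mset (image_mset f (M P)))"
  by (induction Fs) auto

lemma degree_prod_mset_monic:
  fixes Fs :: "'a::idom poly multiset"
  assumes "\<forall>P\<in>#Fs. P \<noteq> 0"
  shows "degree (prod_mset Fs) = (\<Sum>P\<in>#Fs. degree P)"
  using assms by (induction Fs) (auto simp: degree_mult_eq prod_mset_zero_iff)

lemma proots_prod_mset':
  "(\<forall>x\<in>#A. f x \<noteq> 0) \<Longrightarrow> proots (\<Prod>x\<in>#A. f x) = (\<Sum>x\<in>#A. proots (f x))"
proof (induction A)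
  case (add x A)
  have "(\<Prod>x\<in>#A. f x) \<noteq> 0" using add.prems by (auto simp: prod_mset_zero_iff)
  then show ?case using add by (simp add: proots_mult)
qed simp

lemma intm_sum:
  fixes F H :: "'k::{alg_closed_field, field_char_0} R" and Fs :: "'k R multiset"
  assumes km: "kmonic F" and Fs: "\<forall>P\<in>#Fs. P \<in> Rnat"
    and Fe: "F = smult (lead_coeff F) (prod_mset Fs)"
  shows "intm F H = (\<Sum>P\<in>#Fs. intm P H)"
proof -
  have F0: "F \<noteq> 0" using km by (simp add: kmonic_def)
  obtain c0 where c0: "lead_coeff F = fls_const c0" using km by (auto simp: kmonic_def)
  have "lead_coeff F \<noteq> 0" using F0 by simp
  then have c00: "c0 \<noteq> 0" using c0 by auto
  have Fs0: "\<forall>P\<in>#Fs. P \<noteq> 0" using Fs by (auto simp: Rnat_def)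
  have "degree F = degree (smult (lead_coeff F) (prod_mset Fs))" using Fe by (rule arg_cong)
  then have degF: "degree F = (\<Sum>P\<in>#Fs. degree P)"
    using \<open>lead_coeff F \<noteq> 0\<close> degree_prod_mset_monic[OF Fs0] F0 by simp
  show ?thesis
  proof (cases "H = 0")
    case True
    have Pinf: "intm P H = \<infinity>" if "P \<in># Fs" for P
      using that Fs True by (auto simp: intm_def Rnat_def)
    show ?thesis
    proof (cases "Fs = {#}")
      case True
      then show ?thesis using F0 degF \<open>H = 0\<close> by (simp add: intm_def)
    next
      case False
      then obtain P where P: "P \<in># Fs" by blast
      have "degree P > 0" using Fs P by (simp add: Rnat_def)
      obtain Fs' where "Fs = add_mset P Fs'" using P by (metis multi_member_split)
      then have "degree F \<noteq> 0" using degF \<open>degree P > 0\<close> by simp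
      moreover have "(\<Sum>P\<in>#Fs. intm P H) = \<infinity>"
        using P Pinf by (subst sum_mset_ereal_PInf) (auto simp: intm_factor Fs)
      ultimately show ?thesis using F0 \<open>H = 0\<close> by (simp add: intm_def)
    qed
  next
    case False
    define \<nu> where "\<nu> = nuF F"
    have nu: "\<nu> > 0" "\<forall>P\<in>Rnat. P dvd F \<longrightarrow> degree P dvd \<nu>" using nuF_prop[OF F0] by (auto simp: \<nu>_def)
    have dvd: "degree P dvd \<nu>" if "P \<in># Fs" for P
    proof -
      have "P dvd prod_mset Fs" using that by (rule dvd_prod_mset)
      then have "P dvd F" using Fe by (metis dvd_smult)
      then show ?thesis using nu that Fs by blast
    qed
    have "subsX \<nu> F = smult (fls_compose_power (lead_coeff F) \<nu>) (\<Prod>P\<in>#Fs. subsX \<nu> P)"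
      using nu by (subst Fe) (simp add: subsX_smult subsX_prod_mset)
    then have "proots (subsX \<nu> F) = proots (\<Prod>P\<in>#Fs. subsX \<nu> P)"
      using nu F0 by simp
    also have "\<dots> = (\<Sum>P\<in>#Fs. proots (subsX \<nu> P))"
      using Fs0 nu by (intro proots_prod_mset') auto
    finally have pr: "proots (subsX \<nu> F) = (\<Sum>P\<in>#Fs. proots (subsX \<nu> P))" .
    have "Isum \<nu> F H = (\<Sum>P\<in>#Fs. Isum \<nu> P H)"
      unfolding Isum_def pr by (rule sum_mset_sum_mset_image)
    also have "\<dots> = (\<Sum>P\<in>#Fs. ereal (real \<nu>) * intm P H)"
      using Fs dvd nu by (intro arg_cong[where f=sum_mset] image_mset_cong) (simp add: Isum_factor intm_factor hP_def)
    finally have IS: "Isum \<nu> F H = (\<Sum>P\<in>#Fs. ereal (real \<nu>) * intm P H)" .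
    have "intm F H = ereal (real (degree H)) * ordX (lead_coeff F) + ereal (1 / real \<nu>) * Isum \<nu> F H"
      using F0 False by (simp add: intm_def Isum_def \<nu>_def Let_def)
    also have "\<dots> = ereal (1 / real \<nu>) * (\<Sum>P\<in>#Fs. ereal (real \<nu>) * intm P H)"
      using c0 c00 IS by (simp add: ordX_const)
    also have "\<dots> = (\<Sum>P\<in>#Fs. ereal (1 / real \<nu>) * (ereal (real \<nu>) * intm P H))"
      by (rule ereal_mult_sum_mset) simp
    also have "\<dots> = (\<Sum>P\<in>#Fs. intm P H)"
      using nu by (simp add: ereal_inv_cancel)
    finally show ?thesis .
  qed
qed


lemma fls_deriv_poly:
  fixes p :: "'k::field_char_0 fls poly"
  shows "fls_deriv (poly p z) = poly (map_poly fls_deriv p) z + poly (pderiv p) z * fls_deriv z"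
proof (induction p)
  case 0 then show ?case by simp
next
  case (pCons a p)
  have mp: "map_poly fls_deriv (pCons a p) = pCons (fls_deriv a) (map_poly fls_deriv p)"
    by (rule map_poly_pCons) simp
  show ?case using pCons.IH by (simp add: mp pderiv_pCons algebra_simps)
qed

definition dXf :: "nat \<Rightarrow> 'k::field fls" where
  "dXf d = fls_const (of_nat d) * fls_X_intpow (int d - 1)"

lemma shift1_mult: "fls_shift m 1 * (f :: 'k::field fls) = fls_shift m f"
  using fls_X_intpow_times_conv_shift(1)[of "-m" f] by simp

lemma fls_deriv_cp:
  fixes a :: "'k::field_char_0 fls"
  assumes d: "d > 0"
  shows "fls_deriv (fls_compose_power a d) = dXf d * fls_compose_power (fls_deriv a) d"
proof (intro fls_eqI)
  fix n :: int
  have rhs: "(dXf d * fls_compose_power (fls_deriv a) d) $$ n =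
      of_nat d * fls_compose_power (fls_deriv a) d $$ (n - (int d - 1))"
    by (simp add: dXf_def mult.assoc shift1_mult diff_diff_eq2 add_diff_eq)
  show "fls_deriv (fls_compose_power a d) $$ n = (dXf d * fls_compose_power (fls_deriv a) d) $$ n"
  proof (cases "int d dvd n + 1")
    case True
    then obtain k where k: "n + 1 = int d * k" by blast
    have e1: "n - (int d - 1) = int d * (k - 1)" using k by (simp add: algebra_simps)
    have "fls_deriv (fls_compose_power a d) $$ n = of_int (n + 1) * a $$ k"
      using d k by (simp add: fls_nth_compose_power)
    also have "\<dots> = of_nat d * (of_int k * a $$ k)" by (simp add: k)
    also have "\<dots> = of_nat d * fls_compose_power (fls_deriv a) d $$ (n - (int d - 1))"
      using d by (simp add: e1 cp_nth_mult)
    finally show ?thesis using rhs by simp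
  next
    case False
    have "\<not> int d dvd n - (int d - 1)"
    proof
      assume h: "int d dvd n - (int d - 1)"
      have "int d dvd (n - (int d - 1)) + int d" using h by (intro dvd_add) auto
      moreover have "(n - (int d - 1)) + int d = n + 1" by simp
      ultimately show False using False by metis
    qed
    then show ?thesis using False d rhs by (simp add: fls_nth_compose_power)
  qed
qed

lemma map_deriv_subsX:
  fixes G :: "'k::field_char_0 R"
  assumes d: "d > 0"
  shows "map_poly fls_deriv (subsX d G) = smult (dXf d) (subsX d (derX G))"
  by (rule poly_eqI) (simp add: coeff_map_poly coeff_subsX d derX_def fls_deriv_cp)


lemma hP_diff_const:
  assumes "P \<in> Rnat"
  shows "hP P (G - kconst c) = hP P G - fls_const c"
proof -
  have "degree P > 0" using assms by (simp add: Rnat_def)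
  then show ?thesis by (simp add: hP_def subsX_diff subsX_kconst) (simp add: kconst_def)
qed

lemma dXf_props:
  assumes d: "d > 0"
  shows "dXf d \<noteq> (0 :: 'k::field_char_0 fls)" "fls_subdegree (dXf d :: 'k fls) = int d - 1"
proof -
  have nth: "(dXf d :: 'k fls) $$ k = (if k = int d - 1 then of_nat d else 0)" for k
    by (simp add: dXf_def shift1_mult)
  have "(dXf d :: 'k fls) $$ (int d - 1) \<noteq> 0" using d by (simp add: nth)
  then show "dXf d \<noteq> (0 :: 'k fls)" by auto
  show "fls_subdegree (dXf d :: 'k fls) = int d - 1"
    by (rule fls_subdegree_eqI) (use d in \<open>simp_all add: nth\<close>)
qed

lemma ordX_pos_iff:
  fixes g :: "'k::field fls"
  assumes g: "g \<noteq> 0" "fls_subdegree g \<ge> 0"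
  shows "ordX (g - fls_const c) > 0 \<longleftrightarrow> c = g $$ 0"
proof -
  define h where "h = g - fls_const c"
  have hneg: "h $$ k = 0" if "k < 0" for k
    using that g by (simp add: h_def)
  have h0: "h $$ 0 = g $$ 0 - c" by (simp add: h_def)
  show ?thesis
  proof
    assume "ordX (g - fls_const c) > 0"
    then have "h = 0 \<or> fls_subdegree h > 0" by (auto simp: ordX_def h_def split: if_splits)
    then have "h $$ 0 = 0" by auto
    then show "c = g $$ 0" using h0 by simp
  next
    assume c: "c = g $$ 0"
    show "ordX (g - fls_const c) > 0"
    proof (cases "h = 0")
      case True then show ?thesis by (simp add: ordX_def h_def)
    next
      case False
      have "fls_subdegree h \<ge> 0" using False hneg by (intro fls_subdegree_geI) auto
      moreover have "fls_subdegree h \<noteq> 0"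
        using nth_fls_subdegree_nonzero[OF False] h0 c by auto
      ultimately show ?thesis using False by (simp add: ordX_def h_def)
    qed
  qed
qed

lemma factor_main:
  fixes P G :: "'k::{alg_closed_field, field_char_0} R"
  assumes P: "P \<in> Rnat" and Pd: "P dvd pderiv G"
    and fin: "\<forall>c. intm P (G - kconst c) \<noteq> \<infinity>"
  shows "\<exists>a b c :: int. intm P (derX G) = ereal (of_int a) \<and> intm P G = ereal (of_int b)
     \<and> (case res P G of Some c \<Rightarrow> if c \<noteq> 0 then intm P (G - kconst c) else 0 | None \<Rightarrow> 0) = ereal (of_int c)
     \<and> a = b - int (degree P) + c"
proof -
  define d where "d = degree P"
  have d0: "d > 0" using P by (simp add: Rnat_def d_def)
  define w where "w = wP P"
  define g where "g = hP P G"
  define gx where "gx = hP P (derX G)"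
  have gc: "intm P (G - kconst c) = ordX (g - fls_const c)" for c
    using intm_factor[OF P] hP_diff_const[OF P] by (simp add: g_def)
  have gcne: "g - fls_const c \<noteq> 0" for c
    using fin gc[of c] by (auto simp: ordX_def)
  have g0: "g \<noteq> 0" using gcne[of 0] by simp
  have root: "poly (subsX d (pderiv G)) w = 0"
  proof -
    have "subsX d P dvd subsX d (pderiv G)" using Pd d0 by (simp add: subsX_dvd)
    then obtain r where r: "subsX d (pderiv G) = subsX d P * r" by (elim dvdE)
    have "poly (subsX d P) w = 0" using wP_root[OF P] by (simp add: d_def w_def)
    then show ?thesis by (simp add: r)
  qed
  have der: "fls_deriv g = dXf d * gx"
    using fls_deriv_poly[of "subsX d G" w] root d0
    by (simp add: g_def gx_def hP_def d_def[symmetric] w_def[symmetric] map_deriv_subsX pderiv_subsX)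
  have dX: "dXf d \<noteq> (0 :: 'k fls)" "fls_subdegree (dXf d :: 'k fls) = int d - 1"
    using dXf_props[OF d0] by auto
  have key: "gx \<noteq> 0 \<and> fls_subdegree gx = fls_subdegree f - int d"
    if f: "fls_deriv f = fls_deriv g" "f \<noteq> 0" "fls_subdegree f \<noteq> 0" "\<And>c. f \<noteq> fls_const c" for f
  proof -
    have "fls_deriv f \<noteq> 0" using f(4) fls_deriv_eq_0_iff[of f] by auto
    then have gx0: "gx \<noteq> 0" using f(1) der by auto
    have "fls_subdegree (fls_deriv f) = fls_subdegree f - 1" using f(3) by (rule fls_subdegree_deriv)
    moreover have "fls_subdegree (fls_deriv f) = int d - 1 + fls_subdegree gx"
      using f(1) der dX gx0 by simp
    ultimately show ?thesis using gx0 by simp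
  qed
  have ig: "intm P G = ereal (of_int (fls_subdegree g))"
    using intm_factor[OF P] g0 by (simp add: g_def ordX_def)
  have igx: "intm P (derX G) = ordX gx" using intm_factor[OF P] by (simp add: gx_def)
  have resP: "res P G = (if fls_subdegree g \<ge> 0 then Some (g $$ 0) else None)"
  proof (cases "fls_subdegree g \<ge> 0")
    case True
    have "(THE c. intm P (G - kconst c) > 0) = g $$ 0"
      using ordX_pos_iff[OF g0 True] by (simp add: gc)
    then show ?thesis using True ig by (simp add: res_def)
  next
    case False
    then show ?thesis using ig by (simp add: res_def)
  qed
  show ?thesis
  proof (cases "fls_subdegree g = 0")
    case True
    define g1 where "g1 = g - fls_const (g $$ 0)"
    have g10: "g1 \<noteq> 0" using gcne by (simp add: g1_def)
    have "g $$ 0 \<noteq> 0" using nth_fls_subdegree_nonzero[OF g0] True by simp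
    have "g1 $$ 0 = 0" by (simp add: g1_def)
    then have sg1: "fls_subdegree g1 \<noteq> 0" using nth_fls_subdegree_nonzero[OF g10] by auto
    have g1c: "g1 \<noteq> fls_const c" for c
    proof
      assume "g1 = fls_const c"
      then have "g = fls_const (g $$ 0) + fls_const c" unfolding g1_def by (metis add.commute diff_add_cancel)
      then have "g = fls_const (g $$ 0 + c)" by (simp add: fls_plus_const)
      then show False using gcne[of "g $$ 0 + c"] by simp
    qed
    have "fls_deriv g1 = fls_deriv g" by (simp add: g1_def)
    from key[OF this g10 sg1 g1c] have k: "gx \<noteq> 0" "fls_subdegree gx = fls_subdegree g1 - int d" by auto
    have "intm P (G - kconst (g $$ 0)) = ereal (of_int (fls_subdegree g1))"
      using gc g10 by (simp add: g1_def ordX_def)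
    then have "(case res P G of Some c \<Rightarrow> if c \<noteq> 0 then intm P (G - kconst c) else 0 | None \<Rightarrow> 0)
        = ereal (of_int (fls_subdegree g1))"
      using resP True \<open>g $$ 0 \<noteq> 0\<close> by simp
    moreover have "intm P (derX G) = ereal (of_int (fls_subdegree gx))" using igx k by (simp add: ordX_def)
    ultimately show ?thesis using ig k True by (intro exI[of _ "fls_subdegree gx"] exI[of _ "fls_subdegree g"]
        exI[of _ "fls_subdegree g1"]) (simp add: d_def)
  next
    case False
    have gc': "g \<noteq> fls_const c" for c using gcne[of c] by simp
    from key[OF refl g0 False gc'] have k: "gx \<noteq> 0" "fls_subdegree gx = fls_subdegree g - int d" by auto
    have "(case res P G of Some c \<Rightarrow> if c \<noteq> 0 then intm P (G - kconst c) else 0 | None \<Rightarrow> 0) = ereal (of_int 0)"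
    proof (cases "fls_subdegree g \<ge> 0")
      case True
      then have "g $$ 0 = 0" using False by simp
      then show ?thesis using resP True by simp
    next
      case False
      then show ?thesis using resP by simp
    qed
    moreover have "intm P (derX G) = ereal (of_int (fls_subdegree gx))" using igx k by (simp add: ordX_def)
    ultimately show ?thesis using ig k by (intro exI[of _ "fls_subdegree gx"] exI[of _ "fls_subdegree g"]
        exI[of _ 0]) (simp add: d_def)
  qed
qed


lemma sum_mset_filter_if:
  "(\<Sum>P\<in>#filter_mset p M. f P) = (\<Sum>P\<in>#M. if p P then f P else (0::'a::comm_monoid_add))"
  by (induction M) auto

lemma sum_swap_mset:
  "(\<Sum>c\<in>C. \<Sum>P\<in>#M. h c P) = (\<Sum>P\<in>#M. \<Sum>c\<in>C. h c P :: 'a::comm_monoid_add)"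
  by (induction M) (auto simp: sum.distrib)

lemma sum_mset_cong':
  "(\<And>x. x \<in># M \<Longrightarrow> f x = g x) \<Longrightarrow> (\<Sum>x\<in>#M. f x) = (\<Sum>x\<in>#M. g x)"
  by (metis image_mset_cong)

lemma betaF_rewrite:
  "betaF Fs G = (\<Sum>P\<in>#Fs. (case res P G of Some c \<Rightarrow> if c \<noteq> 0 then intm P (G - kconst c) else 0 | None \<Rightarrow> 0))"
proof -
  define C where "C = alphaSet Fs G - {0}"
  have "alphaSet Fs G \<subseteq> (\<lambda>P. the (res P G)) ` set_mset Fs"
    by (auto simp: alphaSet_def alphaL_def) (metis (mono_tags, lifting) image_eqI option.sel)
  then have Cfin: "finite C" unfolding C_def by (meson finite_Diff finite_imageI finite_set_mset finite_subset)
  have "betaF Fs G = (\<Sum>c\<in>C. \<Sum>P\<in>#Fs. if res P G = Some c then intm P (G - kconst c) else 0)"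
    unfolding betaF_def betaL_def alphaL_def C_def by (simp add: sum_mset_filter_if)
  also have "\<dots> = (\<Sum>P\<in>#Fs. \<Sum>c\<in>C. if res P G = Some c then intm P (G - kconst c) else 0)"
    by (rule sum_swap_mset)
  also have "\<dots> = (\<Sum>P\<in>#Fs. (case res P G of Some c \<Rightarrow> if c \<noteq> 0 then intm P (G - kconst c) else 0 | None \<Rightarrow> 0))"
  proof (rule sum_mset_cong')
    fix P assume P: "P \<in># Fs"
    show "(\<Sum>c\<in>C. if res P G = Some c then intm P (G - kconst c) else 0) =
      (case res P G of Some c \<Rightarrow> if c \<noteq> 0 then intm P (G - kconst c) else 0 | None \<Rightarrow> 0)"
    proof (cases "res P G")
      case None then show ?thesis by simp
    next
      case (Some c0)
      have "(\<Sum>c\<in>C. if res P G = Some c then intm P (G - kconst c) else 0) =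
            (\<Sum>c\<in>C. if c0 = c then intm P (G - kconst c) else 0)" using Some by simp
      also have "\<dots> = (if c0 \<in> C then intm P (G - kconst c0) else 0)"
        using Cfin by (simp add: sum.delta)
      also have "c0 \<in> C \<longleftrightarrow> c0 \<noteq> 0"
      proof -
        have "P \<in># alphaL Fs G c0" using P Some by (simp add: alphaL_def)
        then have "alphaL Fs G c0 \<noteq> {#}" by auto
        then show ?thesis by (auto simp: C_def alphaSet_def)
      qed
      finally show ?thesis using Some by simp
    qed
  qed
  finally show ?thesis .
qed

lemma sum_mset_ereal_int:
  "(\<Sum>P\<in>#M. ereal (of_int (f P))) = ereal (of_int (\<Sum>P\<in>#M. f P))"
  by (induction M) auto

theorem mainTheorem2:
  fixes F G :: "'k::{alg_closed_field, field_char_0} fls poly"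
    and Fs :: "'k fls poly multiset"
  assumes "kmonic F"
    and "\<forall>P\<in>#Fs. P \<in> Rnat"
    and "F = smult (lead_coeff F) (prod_mset Fs)"
    and "\<forall>c::'k. intm F (G - kconst c) \<noteq> \<infinity>"
    and "\<forall>P\<in>#Fs. P dvd pderiv G"
  shows "\<exists>a b c :: int. intm F (derX G) = ereal (of_int a) \<and> intm F G = ereal (of_int b)
           \<and> betaF Fs G = ereal (of_int c) \<and> a = b - int (degree F) + c"
proof -
  note km = assms(1) and Fs = assms(2) and Fe = assms(3) and fin = assms(4) and dv = assms(5)
  define bt where "bt P = (case res P G of Some c \<Rightarrow> if c \<noteq> 0 then intm P (G - kconst c) else 0 | None \<Rightarrow> 0)" for P
  have finP: "\<forall>c. intm P (G - kconst c) \<noteq> \<infinity>" if P: "P \<in># Fs" for P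
  proof
    fix c
    have "intm F (G - kconst c) = (\<Sum>Q\<in>#Fs. intm Q (G - kconst c))" by (rule intm_sum[OF km Fs Fe])
    moreover have "\<forall>x\<in>#image_mset (\<lambda>Q. intm Q (G - kconst c)) Fs. x \<noteq> -\<infinity>"
      using Fs by (auto simp: intm_factor)
    ultimately have "(\<exists>x\<in>#image_mset (\<lambda>Q. intm Q (G - kconst c)) Fs. x = \<infinity>) \<Longrightarrow> False"
      using fin sum_mset_ereal_PInf[of "image_mset (\<lambda>Q. intm Q (G - kconst c)) Fs"] by auto
    then show "intm P (G - kconst c) \<noteq> \<infinity>" using P by (metis (mono_tags, lifting) image_eqI set_image_mset)
  qed
  have "\<forall>P\<in>set_mset Fs. \<exists>t :: int \<times> int \<times> int. intm P (derX G) = ereal (of_int (fst t)) \<and>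
      intm P G = ereal (of_int (fst (snd t))) \<and> bt P = ereal (of_int (snd (snd t))) \<and>
      fst t = fst (snd t) - int (degree P) + snd (snd t)"
  proof
    fix P assume P: "P \<in> set_mset Fs"
    obtain a b c :: int where "intm P (derX G) = ereal (of_int a) \<and> intm P G = ereal (of_int b)
     \<and> bt P = ereal (of_int c) \<and> a = b - int (degree P) + c"
      using factor_main[of P G] P Fs dv finP unfolding bt_def by auto
    then show "\<exists>t :: int \<times> int \<times> int. intm P (derX G) = ereal (of_int (fst t)) \<and>
      intm P G = ereal (of_int (fst (snd t))) \<and> bt P = ereal (of_int (snd (snd t))) \<and>
      fst t = fst (snd t) - int (degree P) + snd (snd t)"
      by (intro exI[of _ "(a, b, c)"]) simp
  qed
  then obtain t where t: "\<And>P. P \<in># Fs \<Longrightarrow> intm P (derX G) = ereal (of_int (fst (t P))) \<and>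
      intm P G = ereal (of_int (fst (snd (t P)))) \<and> bt P = ereal (of_int (snd (snd (t P)))) \<and>
      fst (t P) = fst (snd (t P)) - int (degree P) + snd (snd (t P))"
    by (metis bchoice)
  have F0: "F \<noteq> 0" using km by (simp add: kmonic_def)
  have "lead_coeff F \<noteq> 0" using F0 by simp
  have Fs0: "\<forall>P\<in>#Fs. P \<noteq> 0" using Fs by (auto simp: Rnat_def)
  have "degree F = degree (smult (lead_coeff F) (prod_mset Fs))" using Fe by (rule arg_cong)
  then have degF: "degree F = (\<Sum>P\<in>#Fs. degree P)"
    using \<open>lead_coeff F \<noteq> 0\<close> degree_prod_mset_monic[OF Fs0] F0 by simp
  have ia: "intm F (derX G) = ereal (of_int (\<Sum>P\<in>#Fs. fst (t P)))"
    unfolding intm_sum[OF km Fs Fe] sum_mset_ereal_int[symmetric]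
    by (rule sum_mset_cong') (use t in auto)
  have ib: "intm F G = ereal (of_int (\<Sum>P\<in>#Fs. fst (snd (t P))))"
    unfolding intm_sum[OF km Fs Fe] sum_mset_ereal_int[symmetric]
    by (rule sum_mset_cong') (use t in auto)
  have ic: "betaF Fs G = ereal (of_int (\<Sum>P\<in>#Fs. snd (snd (t P))))"
    unfolding betaF_rewrite sum_mset_ereal_int[symmetric] bt_def[symmetric]
    by (rule sum_mset_cong') (use t in auto)
  have "(\<Sum>P\<in>#Fs. fst (t P)) = (\<Sum>P\<in>#Fs. fst (snd (t P)) - int (degree P) + snd (snd (t P)))"
    by (rule sum_mset_cong') (use t in auto)
  also have "\<dots> = (\<Sum>P\<in>#Fs. fst (snd (t P))) - int (degree F) + (\<Sum>P\<in>#Fs. snd (snd (t P)))"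
    unfolding degF by (induction Fs) auto
  finally show ?thesis using ia ib ic by blast
qed


end
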